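(* Let $(\beta,\gamma)$ be antiferromagnetic and $\lambda>0$ with $(\beta,\gamma,\lambda)\neq(\beta,\beta,1)$, and let $x^*>0$ be the unique positive solution of $x^*=\frac{1+\gamma\lambda(x^* )^2}{\beta+\lambda(x^* )^2}$. For every $\epsilon_1,\epsilon_2>0$ there exist field gadgets $\mathcal{T}_1,\mathcal{T}_2$ with effective fields $R_1,R_2$ such that $|R_1-x^*|<\epsilon_1$ and $|R_2-x^*|<\epsilon_2|R_1-x^*|$.
   Context: A pair $(\beta,\gamma)$ with $\beta,\gamma\geq0$ is antiferromagnetic if $\beta\gamma\in[0,1)$ and at least one is nonzero. For a graph $G=(V,E)$ and $\lambda>0$, $\mu_{G;\beta,\gamma,\lambda}(\sigma)=\lambda^{|\sigma|}\beta^{m_0(\sigma)}\gamma^{m_1(\sigma)}/Z$ for $\sigma:V\to\{0,1\}$, $|\sigma|=\sum_v\sigma(v)$, $m_0,m_1$ the numbers of edges with both endpoints spin $0$, resp. spin $1$, convention $0^0=1$. A field gadget is a rooted tree $\mathcal{T}$ whose root $\rho$ has degree one; in the special case $\lambda=\frac{1-\beta}{1-\gamma}$ with $\beta\neq\gamma$, a field gadget is such a rooted tree in which in addition a triangle is attached on a subset of the leaves. With $\mu=\mu_{\mathcal{T};\beta,\gamma,\lambda}$, the effective field is $R_{\mathcal{T}}=\frac{1}{\lambda}\frac{\mu(\sigma(\rho)=1)}{\mu(\sigma(\rho)=0)}$. *)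

theory Defs
  imports Complex_Main "HOL-Library.FuncSet"
begin

definition simple_graph :: "'a set \<Rightarrow> 'a set set \<Rightarrow> bool" where
  "simple_graph V E \<longleftrightarrow> finite V \<and> (\<forall>e\<in>E. \<exists>u v. u \<in> V \<and> v \<in> V \<and> u \<noteq> v \<and> e = {u, v})"

definition adj :: "'a set set \<Rightarrow> 'a \<Rightarrow> 'a \<Rightarrow> bool" where
  "adj E u v \<longleftrightarrow> {u, v} \<in> E"

definition is_path :: "'a set set \<Rightarrow> 'a list \<Rightarrow> bool" where
  "is_path E xs \<longleftrightarrow> distinct xs \<and> (\<forall>i. Suc i < length xs \<longrightarrow> adj E (xs ! i) (xs ! Suc i))"

definition graph_connected :: "'a set \<Rightarrow> 'a set set \<Rightarrow> bool" where
  "graph_connected V E \<longleftrightarrow>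
     (\<forall>u\<in>V. \<forall>v\<in>V. \<exists>xs. xs \<noteq> [] \<and> hd xs = u \<and> last xs = v \<and> set xs \<subseteq> V \<and> is_path E xs)"

definition has_cycle :: "'a set set \<Rightarrow> bool" where
  "has_cycle E \<longleftrightarrow> (\<exists>xs. 3 \<le> length xs \<and> is_path E xs \<and> adj E (last xs) (hd xs))"

definition is_tree :: "'a set \<Rightarrow> 'a set set \<Rightarrow> bool" where
  "is_tree V E \<longleftrightarrow> simple_graph V E \<and> V \<noteq> {} \<and> graph_connected V E \<and> \<not> has_cycle E"

definition degree :: "'a set set \<Rightarrow> 'a \<Rightarrow> nat" where
  "degree E v = card {e \<in> E. v \<in> e}"

definition antiferromagnetic :: "real \<Rightarrow> real \<Rightarrow> bool" where
  "antiferromagnetic \<beta> \<gamma> \<longleftrightarrow> \<beta> \<ge> 0 \<and> \<gamma> \<ge> 0 \<and> \<beta> * \<gamma> < 1 \<and> (\<beta> \<noteq> 0 \<or> \<gamma> \<noteq> 0)"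

text \<open>Configurations \<sigma> : V \<rightarrow> {0,1} (extensional functions); unnormalised weight
  \<lambda>^|\<sigma>| \<beta>^m0 \<gamma>^m1, with 0^0 = 1 built into HOL's power.\<close>
definition configs :: "'a set \<Rightarrow> ('a \<Rightarrow> nat) set" where
  "configs V = (V \<rightarrow>\<^sub>E {0, 1})"

definition m0 :: "'a set set \<Rightarrow> ('a \<Rightarrow> nat) \<Rightarrow> nat" where
  "m0 E \<sigma> = card {e \<in> E. \<forall>v\<in>e. \<sigma> v = 0}"

definition m1 :: "'a set set \<Rightarrow> ('a \<Rightarrow> nat) \<Rightarrow> nat" where
  "m1 E \<sigma> = card {e \<in> E. \<forall>v\<in>e. \<sigma> v = 1}"

definition gibbs_weight :: "real \<Rightarrow> real \<Rightarrow> real \<Rightarrow> 'a set \<Rightarrow> 'a set set \<Rightarrow> ('a \<Rightarrow> nat) \<Rightarrow> real" where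
  "gibbs_weight \<beta> \<gamma> lam V E \<sigma> = lam ^ (\<Sum>v\<in>V. \<sigma> v) * \<beta> ^ m0 E \<sigma> * \<gamma> ^ m1 E \<sigma>"

definition partition_fn :: "real \<Rightarrow> real \<Rightarrow> real \<Rightarrow> 'a set \<Rightarrow> 'a set set \<Rightarrow> real" where
  "partition_fn \<beta> \<gamma> lam V E = (\<Sum>\<sigma>\<in>configs V. gibbs_weight \<beta> \<gamma> lam V E \<sigma>)"

definition gibbs_prob :: "real \<Rightarrow> real \<Rightarrow> real \<Rightarrow> 'a set \<Rightarrow> 'a set set \<Rightarrow> (('a \<Rightarrow> nat) \<Rightarrow> bool) \<Rightarrow> real" where
  "gibbs_prob \<beta> \<gamma> lam V E P =
     (\<Sum>\<sigma>\<in>{\<sigma> \<in> configs V. P \<sigma>}. gibbs_weight \<beta> \<gamma> lam V E \<sigma>) / partition_fn \<beta> \<gamma> lam V E"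

definition field_gadget :: "real \<Rightarrow> real \<Rightarrow> real \<Rightarrow> 'a set \<Rightarrow> 'a set set \<Rightarrow> 'a \<Rightarrow> bool" where
  "field_gadget \<beta> \<gamma> lam V E \<rho> \<longleftrightarrow>
     (if lam = (1 - \<beta>) / (1 - \<gamma>) \<and> \<beta> \<noteq> \<gamma> then
        (\<exists>VT ET L a b. is_tree VT ET \<and> \<rho> \<in> VT \<and> degree ET \<rho> = 1 \<and>
           L \<subseteq> {l \<in> VT. l \<noteq> \<rho> \<and> degree ET l = 1} \<and>
           inj_on a L \<and> inj_on b L \<and>
           a ` L \<inter> VT = {} \<and> b ` L \<inter> VT = {} \<and> a ` L \<inter> b ` L = {} \<and>
           V = VT \<union> a ` L \<union> b ` L \<and>
           E = ET \<union> (\<Union>l\<in>L. {{l, a l}, {l, b l}, {a l, b l}}))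
      else is_tree V E \<and> \<rho> \<in> V \<and> degree E \<rho> = 1)"

definition effective_field :: "real \<Rightarrow> real \<Rightarrow> real \<Rightarrow> 'a set \<Rightarrow> 'a set set \<Rightarrow> 'a \<Rightarrow> real" where
  "effective_field \<beta> \<gamma> lam V E \<rho> =
     (1 / lam) * (gibbs_prob \<beta> \<gamma> lam V E (\<lambda>\<sigma>. \<sigma> \<rho> = 1) / gibbs_prob \<beta> \<gamma> lam V E (\<lambda>\<sigma>. \<sigma> \<rho> = 0))"

end

theory Submission
  imports Defs
begin

lemma adj_sym: "adj E u v = adj E v u"
  by (simp add: adj_def insert_commute)

lemma is_path_mono: "is_path E xs \<Longrightarrow> E \<subseteq> E' \<Longrightarrow> is_path E' xs"
  by (auto simp: is_path_def adj_def)

lemma all_nat_split: "(\<forall>i::nat. Q i) = (Q 0 \<and> (\<forall>i. Q (Suc i)))"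
  by (metis not0_implies_Suc)

lemma is_path_Cons:
  "is_path E (y # xs) \<longleftrightarrow> is_path E xs \<and> y \<notin> set xs \<and> (xs \<noteq> [] \<longrightarrow> adj E y (hd xs))"
proof (cases xs)
  case Nil then show ?thesis by (simp add: is_path_def)
next
  case (Cons z zs)
  have "(\<forall>i. Suc i < length (y#z#zs) \<longrightarrow> adj E ((y#z#zs) ! i) ((y#z#zs) ! Suc i)) \<longleftrightarrow>
        adj E y z \<and> (\<forall>i. Suc i < length (z#zs) \<longrightarrow> adj E ((z#zs) ! i) ((z#zs) ! Suc i))"
    by (subst all_nat_split) simp
  then show ?thesis using Cons by (auto simp: is_path_def)
qed

lemma is_path_rev: "is_path E (rev xs) \<longleftrightarrow> is_path E xs"
proof -
  have *: "is_path E (rev xs)" if "is_path E xs" for xs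
    unfolding is_path_def
  proof (intro conjI allI impI)
    show "distinct (rev xs)" using that by (simp add: is_path_def)
    fix i assume i: "Suc i < length (rev xs)"
    let ?n = "length xs"
    have "adj E (xs ! (?n - 2 - i)) (xs ! Suc (?n - 2 - i))"
      using that i by (auto simp: is_path_def)
    moreover have "rev xs ! i = xs ! Suc (?n - 2 - i)" "rev xs ! Suc i = xs ! (?n - 2 - i)"
      using i by (auto simp: rev_nth Suc_diff_Suc numeral_2_eq_2)
    ultimately show "adj E (rev xs ! i) (rev xs ! Suc i)" by (simp add: adj_sym)
  qed
  show ?thesis using *[of xs] *[of "rev xs"] by auto
qed

lemma is_path_snoc:
  "is_path E (xs @ [y]) \<longleftrightarrow> is_path E xs \<and> y \<notin> set xs \<and> (xs \<noteq> [] \<longrightarrow> adj E (last xs) y)"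
proof -
  have "is_path E (xs @ [y]) \<longleftrightarrow> is_path E (y # rev xs)" by (metis is_path_rev rev.simps(2) rev_rev_ident)
  also have "\<dots> \<longleftrightarrow> is_path E xs \<and> y \<notin> set xs \<and> (xs \<noteq> [] \<longrightarrow> adj E (last xs) y)"
    by (simp add: is_path_Cons is_path_rev hd_rev adj_sym)
  finally show ?thesis .
qed

lemma tree_add_leaf:
  assumes T: "is_tree V E" and v: "v \<notin> V" and w: "w \<in> V"
  shows "is_tree (insert v V) (insert {w,v} E)"
proof -
  have sg: "simple_graph V E" and conn: "graph_connected V E" and nc: "\<not> has_cycle E"
    using T by (auto simp: is_tree_def)
  have Esub: "\<forall>e\<in>E. e \<subseteq> V" using sg by (auto simp: simple_graph_def)
  let ?E = "insert {w,v} E"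
  have sg': "simple_graph (insert v V) ?E"
    unfolding simple_graph_def
  proof (intro conjI ballI)
    show "finite (insert v V)" using sg by (simp add: simple_graph_def)
    fix e assume "e \<in> ?E"
    then show "\<exists>a b. a \<in> insert v V \<and> b \<in> insert v V \<and> a \<noteq> b \<and> e = {a, b}"
    proof
      assume "e = {w,v}" then show ?thesis using v w by blast
    next
      assume "e \<in> E" then obtain a b where "a \<in> V" "b \<in> V" "a \<noteq> b" "e = {a,b}"
        using sg by (auto simp: simple_graph_def)
      then show ?thesis by blast
    qed
  qed
  have conn': "graph_connected (insert v V) ?E"
    unfolding graph_connected_def
  proof (intro ballI)
    fix a b assume a: "a \<in> insert v V" and b: "b \<in> insert v V"
    show "\<exists>xs. xs \<noteq> [] \<and> hd xs = a \<and> last xs = b \<and> set xs \<subseteq> insert v V \<and> is_path ?E xs"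
    proof (cases "a = v")
      case av: True
      show ?thesis
      proof (cases "b = v")
        case True then show ?thesis using av by (intro exI[of _ "[v]"]) (auto simp: is_path_def)
      next
        case False
        then have "b \<in> V" using b by auto
        then obtain xs where xs: "xs \<noteq> []" "hd xs = w" "last xs = b" "set xs \<subseteq> V" "is_path E xs"
          using conn w unfolding graph_connected_def by blast
        have "is_path ?E (v # xs)"
          using xs v is_path_mono[OF xs(5) subset_insertI] by (auto simp: is_path_Cons adj_def)
        then show ?thesis using xs av by (intro exI[of _ "v # xs"]) auto
      qed
    next
      case anv: False
      then have aV: "a \<in> V" using a by auto
      show ?thesis
      proof (cases "b = v")
        case True
        obtain xs where xs: "xs \<noteq> []" "hd xs = a" "last xs = w" "set xs \<subseteq> V" "is_path E xs"
          using conn w aV unfolding graph_connected_def by blast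
        have "is_path ?E (xs @ [v])"
          using xs v is_path_mono[OF xs(5) subset_insertI] by (auto simp: is_path_snoc adj_def insert_commute)
        then show ?thesis using xs True by (intro exI[of _ "xs @ [v]"]) auto
      next
        case False
        then have "b \<in> V" using b by auto
        then obtain xs where xs: "xs \<noteq> []" "hd xs = a" "last xs = b" "set xs \<subseteq> V" "is_path E xs"
          using conn aV unfolding graph_connected_def by blast
        then show ?thesis using is_path_mono[OF xs(5) subset_insertI] by (intro exI[of _ xs]) auto
      qed
    qed
  qed
  have nc': "\<not> has_cycle ?E"
  proof
    assume "has_cycle ?E"
    then obtain xs where xs: "3 \<le> length xs" "is_path ?E xs" "adj ?E (last xs) (hd xs)"
      unfolding has_cycle_def by blast
    have adjv: "y = w" if "adj ?E v y" for y
    proof -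
      have "{v,y} \<in> ?E" using that by (simp add: adj_def)
      then consider "{v,y} = {w,v}" | "{v,y} \<in> E" by auto
      then show ?thesis
      proof cases
        case 1 then show ?thesis using v w by (auto simp: doubleton_eq_iff)
      next
        case 2 then show ?thesis using Esub v by auto
      qed
    qed
    let ?n = "length xs"
    have dist: "distinct xs" and steps: "\<And>i. Suc i < ?n \<Longrightarrow> adj ?E (xs ! i) (xs ! Suc i)"
      using xs(2) by (auto simp: is_path_def)
    have ne: "xs \<noteq> []" using xs(1) by auto
    have lastadj: "adj ?E (xs ! (?n - 1)) (xs ! 0)"
      using xs(3) last_conv_nth[OF ne] hd_conv_nth[OF ne] by simp
    show False
    proof (cases "v \<in> set xs")
      case False
      have "is_path E xs"
        unfolding is_path_def
      proof (intro conjI allI impI)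
        show "distinct xs" by fact
        fix i assume i: "Suc i < ?n"
        have "{xs ! i, xs ! Suc i} \<in> ?E" using steps[OF i] by (simp add: adj_def)
        moreover have "xs ! i \<noteq> v" "xs ! Suc i \<noteq> v" using False i
          by (metis Suc_lessD nth_mem)+
        ultimately show "adj E (xs ! i) (xs ! Suc i)" by (auto simp: adj_def doubleton_eq_iff)
      qed
      moreover have "adj E (last xs) (hd xs)"
      proof -
        have "{last xs, hd xs} \<in> ?E" using xs(3) by (simp add: adj_def)
        moreover have "last xs \<noteq> v" "hd xs \<noteq> v" using False xs(1)
          by (metis last_in_set hd_in_set list.size(3) not_numeral_le_zero)+
        ultimately show ?thesis by (auto simp: adj_def doubleton_eq_iff)
      qed
      ultimately show False using nc xs(1) unfolding has_cycle_def by blast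
    next
      case True
      then obtain i where i: "i < ?n" "xs ! i = v" by (metis in_set_conv_nth)
      obtain j j' where jj: "j < ?n" "j' < ?n" "j \<noteq> j'" "adj ?E v (xs ! j)" "adj ?E v (xs ! j')"
      proof (cases "i = 0")
        case True
        have "adj ?E v (xs ! 1)" using steps[of 0] xs(1) i True by simp
        moreover have "adj ?E v (xs ! (?n - 1))" using lastadj i True adj_sym by metis
        ultimately show ?thesis using that[of 1 "?n - 1"] xs(1) by force
      next
        case i0: False
        show ?thesis
        proof (cases "i = ?n - 1")
          case True
          have "adj ?E (xs ! (?n - 2)) (xs ! Suc (?n - 2))" using steps[of "?n - 2"] xs(1) by simp
          moreover have "Suc (?n - 2) = i" using True xs(1) by simp
          ultimately have "adj ?E v (xs ! (?n - 2))" using i adj_sym by metis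
          moreover have "adj ?E v (xs ! 0)" using lastadj i True by simp
          ultimately show ?thesis using that[of "?n - 2" 0] xs(1) ne by force
        next
          case False
          have "adj ?E (xs ! (i - 1)) (xs ! Suc (i - 1))" using steps[of "i - 1"] i i0 by simp
          then have "adj ?E v (xs ! (i - 1))" using i i0 adj_sym by (metis Suc_pred' not_gr_zero)
          moreover have "adj ?E v (xs ! Suc i)" using steps[of i] i False by simp
          ultimately show ?thesis using that[of "i - 1" "Suc i"] i False i0 by simp
        qed
      qed
      then have "xs ! j = w" "xs ! j' = w" using adjv by auto
      then show False using dist jj by (metis nth_eq_iff_index_eq)
    qed
  qed
  show ?thesis using sg' conn' nc' by (simp add: is_tree_def)
qed

lemma tree_single: "is_tree {a} {}"
  unfolding is_tree_def simple_graph_def graph_connected_def has_cycle_def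
  by (auto intro!: exI[of _ "[a]"] simp: is_path_def adj_def)

datatype tr = Lf | N tr tr

fun sz :: "tr \<Rightarrow> nat" where
  "sz Lf = 2" | "sz (N a b) = sz a + sz b + 2"

fun tV :: "tr \<Rightarrow> nat \<Rightarrow> nat set" where
  "tV Lf r = {}"
| "tV (N a b) r = insert (Suc r) (tV a (Suc r)) \<union> insert (r + 2 + sz a) (tV b (r + 2 + sz a))"

fun tE :: "tr \<Rightarrow> nat \<Rightarrow> nat set set" where
  "tE Lf r = {}"
| "tE (N a b) r = insert {r, Suc r} (tE a (Suc r)) \<union> insert {r, r + 2 + sz a} (tE b (r + 2 + sz a))"

fun lvs :: "tr \<Rightarrow> nat \<Rightarrow> nat set" where
  "lvs Lf r = {r}"
| "lvs (N a b) r = lvs a (Suc r) \<union> lvs b (r + 2 + sz a)"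

definition triE :: "nat set \<Rightarrow> nat set set" where
  "triE L = (\<Union>l\<in>L. {{l, Suc l}, {l, l + 2}, {Suc l, l + 2}})"

definition fV :: "bool \<Rightarrow> tr \<Rightarrow> nat \<Rightarrow> nat set" where
  "fV tri t r = tV t r \<union> (if tri then Suc ` lvs t r \<union> (\<lambda>l. l + 2) ` lvs t r else {})"

definition fE :: "bool \<Rightarrow> tr \<Rightarrow> nat \<Rightarrow> nat set set" where
  "fE tri t r = tE t r \<union> (if tri then triE (lvs t r) else {})"

lemma tV_range: "v \<in> tV t r \<Longrightarrow> r < v \<and> v \<le> r + sz t"
proof (induction t arbitrary: r)
  case Lf then show ?case by simp
next
  case (N a b)
  from N.prems consider "v = Suc r" | "v \<in> tV a (Suc r)" | "v = r + 2 + sz a" | "v \<in> tV b (r + 2 + sz a)"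
    by auto
  then show ?case
  proof cases
    case 2 then show ?thesis using N.IH(1)[OF 2] by simp
  next
    case 4 then show ?thesis using N.IH(2)[OF 4] by simp
  qed simp_all
qed

lemma lvs_range: "l \<in> lvs t r \<Longrightarrow> r \<le> l \<and> l + 2 \<le> r + sz t"
proof (induction t arbitrary: r)
  case Lf then show ?case by simp
next
  case (N a b)
  from N.prems consider "l \<in> lvs a (Suc r)" | "l \<in> lvs b (r + 2 + sz a)" by auto
  then show ?case
  proof cases
    case 1 then show ?thesis using N.IH(1)[OF 1] by simp
  next
    case 2 then show ?thesis using N.IH(2)[OF 2] by simp
  qed
qed

lemma lvs_N_gt: "l \<in> lvs (N a b) r \<Longrightarrow> r < l"
  using lvs_range by fastforce

lemma lvs_sub: "l \<in> lvs t r \<Longrightarrow> l = r \<or> l \<in> tV t r"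
  by (induction t arbitrary: r) auto

lemma lvs_succ: "l \<in> lvs t r \<Longrightarrow> Suc l \<notin> tV t r \<and> l + 2 \<notin> tV t r"
proof (induction t arbitrary: r)
  case Lf then show ?case by simp
next
  case (N a b)
  show ?case
  proof (cases "l \<in> lvs a (Suc r)")
    case True
    have "Suc r \<le> l" "l + 2 \<le> Suc r + sz a" using lvs_range[OF True] by auto
    moreover have "\<And>v. v \<in> tV b (r + 2 + sz a) \<Longrightarrow> r + 2 + sz a < v" using tV_range by blast
    ultimately show ?thesis using N.IH(1)[OF True] by fastforce
  next
    case False
    then have lb: "l \<in> lvs b (r + 2 + sz a)" using N.prems by simp
    have "r + 2 + sz a \<le> l" using lvs_range[OF lb] by auto
    moreover have "\<And>v. v \<in> tV a (Suc r) \<Longrightarrow> v \<le> Suc r + sz a" using tV_range by blast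
    ultimately show ?thesis using N.IH(2)[OF lb] by fastforce
  qed
qed

lemma finite_tV: "finite (tV t r)" by (induction t arbitrary: r) auto
lemma finite_tE: "finite (tE t r)" by (induction t arbitrary: r) auto
lemma finite_lvs: "finite (lvs t r)" by (induction t arbitrary: r) auto

lemma tE_sub: "e \<in> tE t r \<Longrightarrow> e \<subseteq> insert r (tV t r)"
proof (induction t arbitrary: r)
  case Lf then show ?case by simp
next
  case (N a b)
  from N.prems consider "e = {r, Suc r}" | "e \<in> tE a (Suc r)" | "e = {r, r + 2 + sz a}" | "e \<in> tE b (r + 2 + sz a)"
    by auto
  then show ?case
  proof cases
    case 2 then show ?thesis using N.IH(1)[OF 2] by auto
  next
    case 4 then show ?thesis using N.IH(2)[OF 4] by auto
  qed auto
qed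

lemma tE_pair: "e \<in> tE t r \<Longrightarrow> \<exists>a b. a \<noteq> b \<and> e = {a, b}"
proof (induction t arbitrary: r)
  case Lf then show ?case by simp
next
  case (N a b)
  from N.prems consider "e = {r, Suc r}" | "e \<in> tE a (Suc r)" | "e = {r, r + 2 + sz a}" | "e \<in> tE b (r + 2 + sz a)"
    by auto
  then show ?case
  proof cases
    case 1 then show ?thesis by (intro exI[of _ r] exI[of _ "Suc r"]) simp
  next
    case 2 then show ?thesis using N.IH(1)[OF 2] by auto
  next
    case 3 then show ?thesis by (intro exI[of _ r] exI[of _ "r + 2 + sz a"]) simp
  next
    case 4 then show ?thesis using N.IH(2)[OF 4] by auto
  qed
qed

lemma tree_ext:
  "is_tree V E \<Longrightarrow> r \<in> V \<Longrightarrow> (\<forall>v\<in>V. v \<le> r) \<Longrightarrow> is_tree (V \<union> tV t r) (E \<union> tE t r)"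
proof (induction t arbitrary: V E r)
  case Lf then show ?case by simp
next
  case (N a b)
  let ?c1 = "Suc r" and ?c2 = "r + 2 + sz a"
  have "?c1 \<notin> V" using N.prems(3) by auto
  then have t1: "is_tree (insert ?c1 V) (insert {r, ?c1} E)"
    using tree_add_leaf[OF N.prems(1) _ N.prems(2)] by blast
  have t2: "is_tree (insert ?c1 V \<union> tV a ?c1) (insert {r, ?c1} E \<union> tE a ?c1)"
    using N.IH(1)[OF t1] N.prems(3) by fastforce
  have c2n: "?c2 \<notin> insert ?c1 V \<union> tV a ?c1"
    using N.prems(3) tV_range[of _ a ?c1] by fastforce
  have t3: "is_tree (insert ?c2 (insert ?c1 V \<union> tV a ?c1)) (insert {r, ?c2} (insert {r, ?c1} E \<union> tE a ?c1))"
    using tree_add_leaf[OF t2 c2n] N.prems(2) by blast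
  have le: "\<forall>v\<in>insert ?c2 (insert ?c1 V \<union> tV a ?c1). v \<le> ?c2"
    using N.prems(3) tV_range[of _ a ?c1] by fastforce
  have t4: "is_tree (insert ?c2 (insert ?c1 V \<union> tV a ?c1) \<union> tV b ?c2)
                    (insert {r, ?c2} (insert {r, ?c1} E \<union> tE a ?c1) \<union> tE b ?c2)"
    using N.IH(2)[OF t3 _ le] by blast
  have "insert ?c2 (insert ?c1 V \<union> tV a ?c1) \<union> tV b ?c2 = V \<union> tV (N a b) r" by auto
  moreover have "insert {r, ?c2} (insert {r, ?c1} E \<union> tE a ?c1) \<union> tE b ?c2 = E \<union> tE (N a b) r" by auto
  ultimately show ?case using t4 by simp
qed

lemma tE_out: "e \<in> tE t r \<Longrightarrow> v \<in> e \<Longrightarrow> v = r \<or> v \<in> tV t r"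
  using tE_sub by blast

lemma lvs_deg: "l \<in> lvs t r \<Longrightarrow> l \<noteq> r \<Longrightarrow> \<exists>p. {e \<in> tE t r. l \<in> e} = {{p, l}}"
proof (induction t arbitrary: r)
  case Lf then show ?case by simp
next
  case (N a b)
  let ?c1 = "Suc r" and ?c2 = "r + 2 + sz a"
  have ra: "\<And>v. v \<in> tV a ?c1 \<Longrightarrow> ?c1 < v \<and> v \<le> ?c1 + sz a" using tV_range by blast
  have rb: "\<And>v. v \<in> tV b ?c2 \<Longrightarrow> ?c2 < v" using tV_range by blast
  show ?case
  proof (cases "l \<in> lvs a ?c1")
    case True
    have lr: "?c1 \<le> l" "l + 2 \<le> ?c1 + sz a" using lvs_range[OF True] by auto
    have nb: "\<And>e. e \<in> tE b ?c2 \<Longrightarrow> l \<notin> e" using tE_out rb lr by fastforce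
    show ?thesis
    proof (cases "l = ?c1")
      case True
      then have "a = Lf" using \<open>l \<in> lvs a ?c1\<close> lvs_N_gt by (metis less_irrefl tr.exhaust)
      then have "{e \<in> tE (N a b) r. l \<in> e} = {{r, l}}" using nb True lr by auto
      then show ?thesis by blast
    next
      case False
      obtain p where p: "{e \<in> tE a ?c1. l \<in> e} = {{p, l}}" using N.IH(1)[OF True False] by blast
      have "{e \<in> tE (N a b) r. l \<in> e} = {e \<in> tE a ?c1. l \<in> e}" using nb lr False by auto
      then show ?thesis using p by blast
    qed
  next
    case False
    then have lb: "l \<in> lvs b ?c2" using N.prems by simp
    have lr: "?c2 \<le> l" using lvs_range[OF lb] by auto
    have na: "\<And>e. e \<in> tE a ?c1 \<Longrightarrow> l \<notin> e" using tE_out ra lr by fastforce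
    show ?thesis
    proof (cases "l = ?c2")
      case True
      then have "b = Lf" using lb lvs_N_gt by (metis less_irrefl tr.exhaust)
      then have "{e \<in> tE (N a b) r. l \<in> e} = {{r, l}}" using na True lr by auto
      then show ?thesis by blast
    next
      case F2: False
      obtain p where p: "{e \<in> tE b ?c2. l \<in> e} = {{p, l}}" using N.IH(2)[OF lb F2] by blast
      have "{e \<in> tE (N a b) r. l \<in> e} = {e \<in> tE b ?c2. l \<in> e}" using na lr F2 by auto
      then show ?thesis using p by blast
    qed
  qed
qed

definition TV :: "tr \<Rightarrow> nat set" where "TV t = {0, 1} \<union> tV t 1"
definition TE :: "tr \<Rightarrow> nat set set" where "TE t = {{0, 1}} \<union> tE t 1"

lemma TV_tree: "is_tree (TV t) (TE t)"
proof -
  have "is_tree (insert (1::nat) {0}) (insert {0, 1} {})"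
    using tree_add_leaf[OF tree_single[of "0::nat"], of 1 0] by auto
  then have "is_tree ({0, 1} \<union> tV t 1) ({{0, 1}} \<union> tE t 1)"
    using tree_ext[of "{0,1}" "{{0,1}}" 1 t] by (simp add: insert_commute)
  then show ?thesis by (simp add: TV_def TE_def)
qed

lemma TE_deg0: "degree (TE t) 0 = 1"
proof -
  have "{e \<in> TE t. 0 \<in> e} = {{0, 1}}"
    using tE_out[of _ t 1 0] tV_range[of 0 t 1] by (auto simp: TE_def)
  then show ?thesis by (simp add: degree_def)
qed

lemma TE_degl: assumes "l \<in> lvs t 1" shows "degree (TE t) l = 1"
proof (cases "l = 1")
  case True
  then have "t = Lf" using assms lvs_N_gt by (metis less_irrefl tr.exhaust)
  then have "{e \<in> TE t. l \<in> e} = {{0, 1}}" using True by (auto simp: TE_def)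
  then show ?thesis by (simp add: degree_def)
next
  case False
  obtain p where p: "{e \<in> tE t 1. l \<in> e} = {{p, l}}" using lvs_deg[OF assms False] by blast
  have "l \<noteq> 0" using lvs_range[OF assms] by auto
  then have "{e \<in> TE t. l \<in> e} = {e \<in> tE t 1. l \<in> e}" using False by (auto simp: TE_def)
  then show ?thesis using p by (simp add: degree_def)
qed

lemma fV_Lf: "fV tri Lf r = (if tri then {Suc r, r + 2} else {})"
  by (auto simp: fV_def)
lemma fE_Lf: "fE tri Lf r = (if tri then {{r, Suc r}, {r, r + 2}, {Suc r, r + 2}} else {})"
  by (simp add: fE_def triE_def)
lemma fV_N: "fV tri (N a b) r = insert (Suc r) (fV tri a (Suc r)) \<union> insert (r + 2 + sz a) (fV tri b (r + 2 + sz a))"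
  by (auto simp: fV_def)
lemma fE_N: "fE tri (N a b) r = insert {r, Suc r} (fE tri a (Suc r)) \<union> insert {r, r + 2 + sz a} (fE tri b (r + 2 + sz a))"
  by (auto simp: fE_def triE_def)

lemma fV_range: "v \<in> fV tri t r \<Longrightarrow> r < v \<and> v \<le> r + sz t"
proof -
  assume v: "v \<in> fV tri t r"
  show ?thesis
  proof (cases "v \<in> tV t r")
    case True then show ?thesis using tV_range by blast
  next
    case False
    then obtain l where "l \<in> lvs t r" "v = Suc l \<or> v = l + 2" using v by (auto simp: fV_def split: if_splits)
    then show ?thesis using lvs_range[of l t r] by auto
  qed
qed

lemma finite_fV: "finite (fV tri t r)"
  by (simp add: fV_def finite_tV finite_lvs)

lemma finite_fE: "finite (fE tri t r)"
  by (simp add: fE_def finite_tE finite_lvs triE_def)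

lemma fE_sub: "e \<in> fE tri t r \<Longrightarrow> e \<subseteq> insert r (fV tri t r)"
proof -
  assume e: "e \<in> fE tri t r"
  show ?thesis
  proof (cases "e \<in> tE t r")
    case True then show ?thesis using tE_sub[OF True] by (auto simp: fV_def)
  next
    case False
    then obtain l where l: "tri" "l \<in> lvs t r" "e \<in> {{l, Suc l}, {l, l + 2}, {Suc l, l + 2}}"
      using e by (auto simp: fE_def triE_def split: if_splits)
    have "l \<in> insert r (tV t r)" using lvs_sub[OF l(2)] by auto
    then show ?thesis using l by (auto simp: fV_def)
  qed
qed

lemma fE_pair: "e \<in> fE tri t r \<Longrightarrow> \<exists>a b. a \<noteq> b \<and> e = {a, b}"
proof -
  assume e: "e \<in> fE tri t r"
  show ?thesis
  proof (cases "e \<in> tE t r")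
    case True then show ?thesis using tE_pair by blast
  next
    case False
    then obtain l where l: "e \<in> {{l, Suc l}, {l, l + 2}, {Suc l, l + 2}}"
      using e by (auto simp: fE_def triE_def split: if_splits)
    then consider "e = {l, Suc l}" | "e = {l, l + 2}" | "e = {Suc l, l + 2}" by blast
    then show ?thesis
    proof cases
      case 1 then show ?thesis by (intro exI[of _ l] exI[of _ "Suc l"]) simp
    next
      case 2 then show ?thesis by (intro exI[of _ l] exI[of _ "l + 2"]) simp
    next
      case 3 then show ?thesis by (intro exI[of _ "Suc l"] exI[of _ "l + 2"]) simp
    qed
  qed
qed

context
  fixes \<beta> \<gamma> lam :: real
begin

definition ew :: "(nat \<Rightarrow> nat) \<Rightarrow> nat set \<Rightarrow> real" where
  "ew \<sigma> e = (if \<forall>u\<in>e. \<sigma> u = 0 then \<beta> else if \<forall>u\<in>e. \<sigma> u = 1 then \<gamma> else 1)"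

definition Am :: "nat \<Rightarrow> nat \<Rightarrow> real" where
  "Am c c' = (if c = 0 \<and> c' = 0 then \<beta> else if c = 1 \<and> c' = 1 then \<gamma> else 1)"

definition Wt :: "nat set \<Rightarrow> nat set set \<Rightarrow> (nat \<Rightarrow> nat \<Rightarrow> real) \<Rightarrow> (nat \<Rightarrow> nat) \<Rightarrow> real" where
  "Wt V E h \<sigma> = (\<Prod>v\<in>V. h v (\<sigma> v)) * (\<Prod>e\<in>E. ew \<sigma> e)"

definition Zs :: "nat set \<Rightarrow> nat set set \<Rightarrow> (nat \<Rightarrow> nat \<Rightarrow> real) \<Rightarrow> real" where
  "Zs V E h = (\<Sum>\<sigma>\<in>configs V. Wt V E h \<sigma>)"

lemma ew_cong: "(\<forall>u\<in>e. \<sigma> u = \<sigma>' u) \<Longrightarrow> ew \<sigma> e = ew \<sigma>' e"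
  by (simp add: ew_def)

lemma ew_pair: "\<sigma> a \<in> {0,1} \<Longrightarrow> \<sigma> b \<in> {0,1} \<Longrightarrow> ew \<sigma> {a, b} = Am (\<sigma> a) (\<sigma> b)"
  by (auto simp: ew_def Am_def)

lemma Zs_cong: "(\<forall>v\<in>V. h v = h' v) \<Longrightarrow> Zs V E h = Zs V E h'"
  unfolding Zs_def Wt_def by (intro sum.cong refl arg_cong2[where f="(*)"] prod.cong) auto

end

lemma sum_configs_insert:
  assumes "v \<notin> V"
  shows "(\<Sum>\<sigma>\<in>configs (insert v V). F \<sigma>) = (\<Sum>\<sigma>\<in>configs V. \<Sum>c\<in>{0,1}. F (\<sigma>(v := c)))"
proof -
  have "configs (insert v V) = (\<lambda>(y, g). g(v := y)) ` ({0,1} \<times> configs V)"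
    unfolding configs_def by (rule PiE_insert_eq)
  moreover have "inj_on (\<lambda>(y, g). g(v := y)) ({0::nat,1} \<times> configs V)"
    unfolding configs_def using inj_combinator[OF assms, of "\<lambda>_. {0::nat,1}"] by simp
  ultimately have "(\<Sum>\<sigma>\<in>configs (insert v V). F \<sigma>) = (\<Sum>p\<in>{0,1} \<times> configs V. F ((\<lambda>(y, g). g(v := y)) p))"
    by (simp add: sum.reindex)
  also have "\<dots> = (\<Sum>c\<in>{0,1}. \<Sum>\<sigma>\<in>configs V. F (\<sigma>(v := c)))"
    unfolding sum.cartesian_product by (rule sum.cong) auto
  also have "\<dots> = (\<Sum>\<sigma>\<in>configs V. \<Sum>c\<in>{0,1}. F (\<sigma>(v := c)))"
    by (rule sum.swap)
  finally show ?thesis .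
qed

lemma configs_val: "\<sigma> \<in> configs V \<Longrightarrow> u \<in> V \<Longrightarrow> \<sigma> u \<in> {0,1}"
  by (auto simp: configs_def)

lemma prod_upd:
  assumes "finite V" "w \<in> V"
  shows "(\<Prod>u\<in>V. (h(w := \<lambda>c. h w c * f c)) u (\<sigma> u)) = (\<Prod>u\<in>V. h u (\<sigma> u)) * (f (\<sigma> w) :: real)"
proof -
  have V: "V = insert w (V - {w})" using assms by auto
  have "(\<Prod>u\<in>V. (h(w := \<lambda>c. h w c * f c)) u (\<sigma> u)) = h w (\<sigma> w) * f (\<sigma> w) * (\<Prod>u\<in>V - {w}. h u (\<sigma> u))"
    by (subst V, subst prod.insert) (use assms in auto)
  also have "\<dots> = (\<Prod>u\<in>V. h u (\<sigma> u)) * f (\<sigma> w)"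
    by (subst (2) V, subst prod.insert) (use assms in auto)
  finally show ?thesis .
qed

context
  fixes \<beta> \<gamma> lam :: real
begin

lemma finite_edges: "finite V \<Longrightarrow> \<forall>e\<in>E. e \<subseteq> V \<Longrightarrow> finite (E :: nat set set)"
  by (meson PowI finite_Pow_iff finite_subset subsetI)

lemma Zs_leaf:
  assumes fin: "finite V" and v: "v \<notin> V" and w: "w \<in> V" and Es: "\<forall>e\<in>E. e \<subseteq> V"
  shows "Zs \<beta> \<gamma> (insert v V) (insert {w,v} E) h
       = Zs \<beta> \<gamma> V E (h(w := \<lambda>c. h w c * (\<Sum>c'\<in>{0,1}. h v c' * Am \<beta> \<gamma> c c')))"
proof -
  have finE: "finite E" using finite_edges[OF fin Es] .
  have wv: "{w,v} \<notin> E" using Es v by auto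
  have key: "Wt \<beta> \<gamma> (insert v V) (insert {w,v} E) h (\<sigma>(v:=c)) = h v c * Am \<beta> \<gamma> (\<sigma> w) c * Wt \<beta> \<gamma> V E h \<sigma>"
    if \<sigma>: "\<sigma> \<in> configs V" and c: "c \<in> {0,1}" for \<sigma> c
  proof -
    have "(\<Prod>u\<in>V. h u ((\<sigma>(v:=c)) u)) = (\<Prod>u\<in>V. h u (\<sigma> u))" using v by (intro prod.cong) auto
    then have p1: "(\<Prod>u\<in>insert v V. h u ((\<sigma>(v:=c)) u)) = h v c * (\<Prod>u\<in>V. h u (\<sigma> u))"
      by (simp add: prod.insert[OF fin v])
    have e1: "(\<Prod>e\<in>E. ew \<beta> \<gamma> (\<sigma>(v:=c)) e) = (\<Prod>e\<in>E. ew \<beta> \<gamma> \<sigma> e)"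
      by (intro prod.cong refl ew_cong) (use Es v in auto)
    have wv': "w \<noteq> v" using v w by auto
    have e2: "ew \<beta> \<gamma> (\<sigma>(v:=c)) {w,v} = Am \<beta> \<gamma> (\<sigma> w) c"
      using ew_pair[of "\<sigma>(v:=c)" w v \<beta> \<gamma>] configs_val[OF \<sigma> w] c wv' by simp
    have p2: "(\<Prod>e\<in>insert {w,v} E. ew \<beta> \<gamma> (\<sigma>(v:=c)) e) = Am \<beta> \<gamma> (\<sigma> w) c * (\<Prod>e\<in>E. ew \<beta> \<gamma> \<sigma> e)"
      by (simp add: prod.insert[OF finE wv] e1 e2)
    show ?thesis unfolding Wt_def p1 p2 by simp
  qed
  have "Zs \<beta> \<gamma> (insert v V) (insert {w,v} E) h
      = (\<Sum>\<sigma>\<in>configs V. \<Sum>c\<in>{0,1}. Wt \<beta> \<gamma> (insert v V) (insert {w,v} E) h (\<sigma>(v:=c)))"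
    unfolding Zs_def by (rule sum_configs_insert[OF v])
  also have "\<dots> = (\<Sum>\<sigma>\<in>configs V. (\<Sum>c\<in>{0,1}. h v c * Am \<beta> \<gamma> (\<sigma> w) c) * Wt \<beta> \<gamma> V E h \<sigma>)"
    by (intro sum.cong refl) (simp add: key distrib_right)
  also have "\<dots> = Zs \<beta> \<gamma> V E (h(w := \<lambda>c. h w c * (\<Sum>c'\<in>{0,1}. h v c' * Am \<beta> \<gamma> c c')))"
    unfolding Zs_def Wt_def
    by (intro sum.cong refl) (subst prod_upd[OF fin w], simp add: mult_ac)
  finally show ?thesis .
qed

lemma Zs_tri:
  assumes fin: "finite V" and a: "a \<notin> V" and b: "b \<notin> V" and ab: "a \<noteq> b" and l: "l \<in> V"
    and Es: "\<forall>e\<in>E. e \<subseteq> V"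
  shows "Zs \<beta> \<gamma> (insert b (insert a V)) (insert {l,a} (insert {l,b} (insert {a,b} E))) h
       = Zs \<beta> \<gamma> V E (h(l := \<lambda>c. h l c * (\<Sum>c1\<in>{0,1}. \<Sum>c2\<in>{0,1}.
            h a c1 * h b c2 * Am \<beta> \<gamma> c c1 * Am \<beta> \<gamma> c c2 * Am \<beta> \<gamma> c1 c2)))"
proof -
  let ?A = "Am \<beta> \<gamma>"
  have finE: "finite E" using finite_edges[OF fin Es] .
  have b': "b \<notin> insert a V" using b ab by auto
  have n1: "{a,b} \<notin> E" using Es a by auto
  have n2: "{l,b} \<notin> insert {a,b} E" using Es b l a by (auto simp: doubleton_eq_iff)
  have n3: "{l,a} \<notin> insert {l,b} (insert {a,b} E)" using Es b l a ab by (auto simp: doubleton_eq_iff)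
  have key: "Wt \<beta> \<gamma> (insert b (insert a V)) (insert {l,a} (insert {l,b} (insert {a,b} E))) h (\<sigma>(a:=c1, b:=c2))
     = (h a c1 * h b c2 * ?A (\<sigma> l) c1 * ?A (\<sigma> l) c2 * ?A c1 c2) * Wt \<beta> \<gamma> V E h \<sigma>"
    if \<sigma>: "\<sigma> \<in> configs V" and c: "c1 \<in> {0,1}" "c2 \<in> {0,1}" for \<sigma> c1 c2
  proof -
    let ?s = "\<sigma>(a:=c1, b:=c2)"
    have "(\<Prod>u\<in>V. h u (?s u)) = (\<Prod>u\<in>V. h u (\<sigma> u))" using a b by (intro prod.cong) auto
    then have p1: "(\<Prod>u\<in>insert b (insert a V). h u (?s u)) = h b c2 * (h a c1 * (\<Prod>u\<in>V. h u (\<sigma> u)))"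
      using fin a b' ab by (simp add: prod.insert)
    have e1: "(\<Prod>e\<in>E. ew \<beta> \<gamma> ?s e) = (\<Prod>e\<in>E. ew \<beta> \<gamma> \<sigma> e)"
      by (intro prod.cong refl ew_cong) (use Es a b in auto)
    have la: "l \<noteq> a" "l \<noteq> b" using l a b by auto
    have sl: "?s l = \<sigma> l" "?s a = c1" "?s b = c2" using la ab by auto
    have vl: "\<sigma> l \<in> {0,1}" using configs_val[OF \<sigma> l] .
    have e2: "ew \<beta> \<gamma> ?s {l,a} = ?A (\<sigma> l) c1" "ew \<beta> \<gamma> ?s {l,b} = ?A (\<sigma> l) c2" "ew \<beta> \<gamma> ?s {a,b} = ?A c1 c2"
      using ew_pair[of ?s l a \<beta> \<gamma>] ew_pair[of ?s l b \<beta> \<gamma>] ew_pair[of ?s a b \<beta> \<gamma>] sl vl c by auto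
    have p2: "(\<Prod>e\<in>insert {l,a} (insert {l,b} (insert {a,b} E)). ew \<beta> \<gamma> ?s e)
        = ?A (\<sigma> l) c1 * (?A (\<sigma> l) c2 * (?A c1 c2 * (\<Prod>e\<in>E. ew \<beta> \<gamma> \<sigma> e)))"
      using finE n1 n2 n3 by (simp add: e1 e2)
    show ?thesis unfolding Wt_def p1 p2 by (simp add: algebra_simps)
  qed
  have "Zs \<beta> \<gamma> (insert b (insert a V)) (insert {l,a} (insert {l,b} (insert {a,b} E))) h
      = (\<Sum>\<sigma>\<in>configs V. \<Sum>c1\<in>{0,1}. \<Sum>c2\<in>{0,1}.
           Wt \<beta> \<gamma> (insert b (insert a V)) (insert {l,a} (insert {l,b} (insert {a,b} E))) h (\<sigma>(a:=c1, b:=c2)))"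
    unfolding Zs_def by (simp add: sum_configs_insert[OF b'] sum_configs_insert[OF a])
  also have "\<dots> = (\<Sum>\<sigma>\<in>configs V. (\<Sum>c1\<in>{0,1}. \<Sum>c2\<in>{0,1}.
            h a c1 * h b c2 * ?A (\<sigma> l) c1 * ?A (\<sigma> l) c2 * ?A c1 c2) * Wt \<beta> \<gamma> V E h \<sigma>)"
    by (intro sum.cong refl) (simp add: key distrib_right)
  also have "\<dots> = Zs \<beta> \<gamma> V E (h(l := \<lambda>c. h l c * (\<Sum>c1\<in>{0,1}. \<Sum>c2\<in>{0,1}.
            h a c1 * h b c2 * ?A c c1 * ?A c c2 * ?A c1 c2)))"
    unfolding Zs_def Wt_def
    by (intro sum.cong refl) (subst prod_upd[OF fin l], simp add: mult_ac)
  finally show ?thesis .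
qed

lemma Zs_single: "Zs \<beta> \<gamma> {v} {} h = h v 0 + h v 1"
proof -
  have "Zs \<beta> \<gamma> (insert v {}) {} h = (\<Sum>\<sigma>\<in>configs {}. \<Sum>c\<in>{0,1}. Wt \<beta> \<gamma> {v} {} h (\<sigma>(v := c)))"
    unfolding Zs_def by (rule sum_configs_insert) simp
  also have "\<dots> = h v 0 + h v 1" by (simp add: configs_def Wt_def)
  finally show ?thesis by simp
qed

end

context
  fixes \<beta> \<gamma> lam :: real
begin

definition Tf :: "nat \<Rightarrow> real" where
  "Tf c = (\<Sum>c1\<in>{0,1}. \<Sum>c2\<in>{0,1}. lam ^ c1 * lam ^ c2 * Am \<beta> \<gamma> c c1 * Am \<beta> \<gamma> c c2 * Am \<beta> \<gamma> c1 c2)"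

fun fac :: "bool \<Rightarrow> tr \<Rightarrow> nat \<Rightarrow> real" where
  "fac tri Lf c = (if tri then Tf c else 1)"
| "fac tri (N a b) c = (\<Sum>c'\<in>{0,1}. lam ^ c' * fac tri a c' * Am \<beta> \<gamma> c c') * (\<Sum>c'\<in>{0,1}. lam ^ c' * fac tri b c' * Am \<beta> \<gamma> c c')"

definition msg :: "bool \<Rightarrow> tr \<Rightarrow> nat \<Rightarrow> real" where
  "msg tri s c = (\<Sum>c'\<in>{0,1}. lam ^ c' * fac tri s c' * Am \<beta> \<gamma> c c')"

lemma fac_N: "fac tri (N a b) c = msg tri a c * msg tri b c"
  by (simp add: msg_def)

lemma Zs_tree:
  "finite V \<Longrightarrow> r \<in> V \<Longrightarrow> \<forall>v\<in>V. v \<le> r \<Longrightarrow> \<forall>e\<in>E. e \<subseteq> V \<Longrightarrow> \<forall>v\<in>fV tri t r. h v = (\<lambda>c. lam ^ c) \<Longrightarrow>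
   Zs \<beta> \<gamma> (V \<union> fV tri t r) (E \<union> fE tri t r) h = Zs \<beta> \<gamma> V E (h(r := \<lambda>c. h r c * fac tri t c))"
proof (induction t arbitrary: V E h r)
  case Lf
  show ?case
  proof (cases tri)
    case False
    then show ?thesis by (simp add: fV_Lf fE_Lf)
  next
    case True
    have a: "Suc r \<notin> V" "r + 2 \<notin> V" using Lf.prems(3) by auto
    have "V \<union> fV tri Lf r = insert (r + 2) (insert (Suc r) V)" using True by (auto simp: fV_Lf)
    moreover have "E \<union> fE tri Lf r = insert {r, Suc r} (insert {r, r + 2} (insert {Suc r, r + 2} E))"
      using True by (auto simp: fE_Lf)
    ultimately have "Zs \<beta> \<gamma> (V \<union> fV tri Lf r) (E \<union> fE tri Lf r) h
      = Zs \<beta> \<gamma> V E (h(r := \<lambda>c. h r c * (\<Sum>c1\<in>{0,1}. \<Sum>c2\<in>{0,1}.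
            h (Suc r) c1 * h (r + 2) c2 * Am \<beta> \<gamma> c c1 * Am \<beta> \<gamma> c c2 * Am \<beta> \<gamma> c1 c2)))"
      using Zs_tri[OF Lf.prems(1) a, where l=r and E=E and h=h and \<beta>=\<beta> and \<gamma>=\<gamma>] Lf.prems(2,4) by simp
    also have "\<dots> = Zs \<beta> \<gamma> V E (h(r := \<lambda>c. h r c * fac tri Lf c))"
    proof -
      have "h (Suc r) = (\<lambda>c. lam ^ c)" "h (r + 2) = (\<lambda>c. lam ^ c)" using Lf.prems(5) True by (auto simp: fV_Lf)
      then show ?thesis using True by (simp add: Tf_def)
    qed
    finally show ?thesis .
  qed
next
  case (N a b)
  let ?c1 = "Suc r" and ?c2 = "r + 2 + sz a"
  let ?A = "Am \<beta> \<gamma>"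
  have ra: "\<And>v. v \<in> fV tri a ?c1 \<Longrightarrow> ?c1 < v \<and> v \<le> ?c1 + sz a" using fV_range by blast
  have rb: "\<And>v. v \<in> fV tri b ?c2 \<Longrightarrow> ?c2 < v" using fV_range by blast
  define V2 where "V2 = V \<union> insert ?c1 (fV tri a ?c1)"
  define E2 where "E2 = E \<union> insert {r, ?c1} (fE tri a ?c1)"
  define V1 where "V1 = insert ?c2 V2"
  define E1 where "E1 = insert {r, ?c2} E2"
  have fin2: "finite V2" using N.prems(1) finite_fV by (simp add: V2_def)
  have c2n: "?c2 \<notin> V2"
  proof
    assume "?c2 \<in> V2"
    then consider "?c2 \<in> V" | "?c2 = ?c1" | "?c2 \<in> fV tri a ?c1" by (auto simp: V2_def)
    then show False
    proof cases
      case 1 then show False using N.prems(3) by force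
    next
      case 2 then show False by simp
    next
      case 3 then show False using ra[OF 3] by simp
    qed
  qed
  have E2s: "\<forall>e\<in>E2. e \<subseteq> V2"
  proof
    fix e assume "e \<in> E2"
    then consider "e \<in> E" | "e = {r, ?c1}" | "e \<in> fE tri a ?c1" by (auto simp: E2_def)
    then show "e \<subseteq> V2"
    proof cases
      case 1 then show ?thesis using N.prems(4) by (auto simp: V2_def)
    next
      case 2 then show ?thesis using N.prems(2) by (auto simp: V2_def)
    next
      case 3 then show ?thesis using fE_sub[OF 3] by (auto simp: V2_def)
    qed
  qed
  have rV2: "r \<in> V2" using N.prems(2) by (simp add: V2_def)
  have le1: "\<forall>v\<in>V1. v \<le> ?c2"
  proof
    fix v assume "v \<in> V1"
    then consider "v = ?c2" | "v \<in> V" | "v = ?c1" | "v \<in> fV tri a ?c1" by (auto simp: V1_def V2_def)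
    then show "v \<le> ?c2"
    proof cases
      case 2 then show ?thesis using N.prems(3) by force
    next
      case 4 then show ?thesis using ra[OF 4] by simp
    qed simp_all
  qed
  have E1s: "\<forall>e\<in>E1. e \<subseteq> V1" using E2s rV2 by (auto simp: E1_def V1_def)
  have hb: "\<forall>v\<in>fV tri b ?c2. h v = (\<lambda>c. lam ^ c)" using N.prems(5) by (simp add: fV_N)
  have hc2: "h ?c2 = (\<lambda>c. lam ^ c)" using N.prems(5) by (simp add: fV_N)
  have hc1: "h ?c1 = (\<lambda>c. lam ^ c)" using N.prems(5) by (simp add: fV_N)
  have eqV: "V \<union> fV tri (N a b) r = V1 \<union> fV tri b ?c2" by (auto simp: V1_def V2_def fV_N)
  have eqE: "E \<union> fE tri (N a b) r = E1 \<union> fE tri b ?c2" by (auto simp: E1_def E2_def fE_N)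
  define h1 where "h1 = h(?c2 := \<lambda>c. h ?c2 c * fac tri b c)"
  define h2 where "h2 = h(r := \<lambda>c. h r c * msg tri b c)"
  define h3 where "h3 = h2(?c1 := \<lambda>c. h2 ?c1 c * fac tri a c)"
  have s1: "Zs \<beta> \<gamma> (V \<union> fV tri (N a b) r) (E \<union> fE tri (N a b) r) h = Zs \<beta> \<gamma> V1 E1 h1"
    unfolding eqV eqE h1_def by (rule N.IH(2)) (use fin2 le1 E1s hb in \<open>auto simp: V1_def\<close>)
  have s2: "Zs \<beta> \<gamma> V1 E1 h1 = Zs \<beta> \<gamma> V2 E2 (h1(r := \<lambda>c. h1 r c * (\<Sum>c'\<in>{0,1}. h1 ?c2 c' * ?A c c')))"
    unfolding V1_def E1_def by (rule Zs_leaf[OF fin2 c2n rV2 E2s])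
  have s3: "Zs \<beta> \<gamma> V2 E2 (h1(r := \<lambda>c. h1 r c * (\<Sum>c'\<in>{0,1}. h1 ?c2 c' * ?A c c'))) = Zs \<beta> \<gamma> V2 E2 h2"
  proof (rule Zs_cong, rule ballI)
    fix v assume v: "v \<in> V2"
    show "(h1(r := \<lambda>c. h1 r c * (\<Sum>c'\<in>{0,1}. h1 ?c2 c' * ?A c c'))) v = h2 v"
    proof (cases "v = r")
      case True
      have "r \<noteq> ?c2" by simp
      then show ?thesis using True using hc2 by (simp add: h1_def h2_def msg_def mult_ac numeral_2_eq_2)
    next
      case False
      have "v \<noteq> ?c2" using v c2n by auto
      then show ?thesis using False by (simp add: h1_def h2_def)
    qed
  qed
  have s4: "Zs \<beta> \<gamma> V2 E2 h2 = Zs \<beta> \<gamma> (insert ?c1 V) (insert {r, ?c1} E) h3"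
  proof -
    have eqs: "V2 = insert ?c1 V \<union> fV tri a ?c1" "E2 = insert {r, ?c1} E \<union> fE tri a ?c1"
      by (auto simp: V2_def E2_def)
    have rn: "r \<notin> fV tri a ?c1" using ra by force
    have "\<forall>v\<in>fV tri a ?c1. h2 v = (\<lambda>c. lam ^ c)"
      using N.prems(5) rn unfolding h2_def fV_N by auto
    moreover have "\<forall>v\<in>insert ?c1 V. v \<le> ?c1" using N.prems(3) by auto
    moreover have "\<forall>e\<in>insert {r, ?c1} E. e \<subseteq> insert ?c1 V" using N.prems(2,4) by auto
    moreover have "finite (insert ?c1 V)" using N.prems(1) by simp
    ultimately have "Zs \<beta> \<gamma> (insert ?c1 V \<union> fV tri a ?c1) (insert {r, ?c1} E \<union> fE tri a ?c1) h2 = Zs \<beta> \<gamma> (insert ?c1 V) (insert {r, ?c1} E) h3"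
      unfolding h3_def by (intro N.IH(1)) auto
    then show ?thesis using eqs by simp
  qed
  have c1n: "?c1 \<notin> V" using N.prems(3) by auto
  have s5: "Zs \<beta> \<gamma> (insert ?c1 V) (insert {r, ?c1} E) h3 = Zs \<beta> \<gamma> V E (h3(r := \<lambda>c. h3 r c * (\<Sum>c'\<in>{0,1}. h3 ?c1 c' * ?A c c')))"
    by (rule Zs_leaf[OF N.prems(1) c1n N.prems(2,4)])
  have s6: "Zs \<beta> \<gamma> V E (h3(r := \<lambda>c. h3 r c * (\<Sum>c'\<in>{0,1}. h3 ?c1 c' * ?A c c'))) = Zs \<beta> \<gamma> V E (h(r := \<lambda>c. h r c * fac tri (N a b) c))"
  proof (rule Zs_cong, rule ballI)
    fix v assume v: "v \<in> V"
    show "(h3(r := \<lambda>c. h3 r c * (\<Sum>c'\<in>{0,1}. h3 ?c1 c' * ?A c c'))) v = (h(r := \<lambda>c. h r c * fac tri (N a b) c)) v"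
    proof (cases "v = r")
      case True
      have "r \<noteq> ?c1" by simp
      then show ?thesis using True by (simp add: h3_def h2_def hc1 msg_def fac_N mult_ac)
    next
      case False
      have "v \<noteq> ?c1" using v c1n by auto
      then show ?thesis using False by (simp add: h3_def h2_def)
    qed
  qed
  have "Zs \<beta> \<gamma> (V \<union> fV tri (N a b) r) (E \<union> fE tri (N a b) r) h = Zs \<beta> \<gamma> V E (h(r := \<lambda>c. h r c * fac tri (N a b) c))"
    using s1 s2 s3 s4 s5 s6 by simp
  then show ?case .
qed

end

definition GV :: "bool \<Rightarrow> tr \<Rightarrow> nat set" where "GV tri t = {0, 1} \<union> fV tri t 1"
definition GE :: "bool \<Rightarrow> tr \<Rightarrow> nat set set" where "GE tri t = {{0, 1}} \<union> fE tri t 1"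

lemma GV_fin: "finite (GV tri t)" by (simp add: GV_def finite_fV)
lemma GE_fin: "finite (GE tri t)" by (simp add: GE_def finite_fE)
lemma GE_ne: "\<forall>e\<in>GE tri t. e \<noteq> {}" using fE_pair by (fastforce simp: GE_def)

context
  fixes \<beta> \<gamma> lam :: real
begin

lemma Zs_gadget:
  assumes h1: "\<forall>v\<in>fV tri t 1. h v = (\<lambda>c. lam ^ c)" and h2: "h 1 = (\<lambda>c. lam ^ c)"
  shows "Zs \<beta> \<gamma> (GV tri t) (GE tri t) h = h 0 0 * msg \<beta> \<gamma> lam tri t 0 + h 0 1 * msg \<beta> \<gamma> lam tri t 1"
proof -
  let ?h' = "h(1 := \<lambda>c. h 1 c * fac \<beta> \<gamma> lam tri t c)"
  have "Zs \<beta> \<gamma> (GV tri t) (GE tri t) h = Zs \<beta> \<gamma> {0,1} {{0,1}} ?h'"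
    unfolding GV_def GE_def by (rule Zs_tree) (use h1 in auto)
  also have "\<dots> = Zs \<beta> \<gamma> (insert 1 {0}) (insert {0,1} {}) ?h'" by (simp add: insert_commute)
  also have "\<dots> = Zs \<beta> \<gamma> {0} {} (?h'(0 := \<lambda>c. ?h' 0 c * (\<Sum>c'\<in>{0,1}. ?h' 1 c' * Am \<beta> \<gamma> c c')))"
    by (rule Zs_leaf) auto
  also have "\<dots> = h 0 0 * msg \<beta> \<gamma> lam tri t 0 + h 0 1 * msg \<beta> \<gamma> lam tri t 1"
  proof -
    have h2': "h (Suc 0) = (\<lambda>c. lam ^ c)" using h2 by simp
    show ?thesis by (simp add: Zs_single h2' msg_def mult_ac)
  qed
  finally show ?thesis .
qed

lemma gibbs_Wt:
  assumes "finite V" "finite E" "\<forall>e\<in>E. e \<noteq> {}"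
  shows "gibbs_weight \<beta> \<gamma> lam V E \<sigma> = Wt \<beta> \<gamma> V E (\<lambda>v c. lam ^ c) \<sigma>"
proof -
  let ?P0 = "\<lambda>e. \<forall>u\<in>e. \<sigma> u = 0" and ?P1 = "\<lambda>e. \<forall>u\<in>e. \<sigma> u = 1"
  have "(\<Prod>e\<in>E. ew \<beta> \<gamma> \<sigma> e) = (\<Prod>e\<in>E. if ?P0 e then \<beta> else (if ?P1 e then \<gamma> else 1))"
    by (simp add: ew_def)
  also have "\<dots> = (\<Prod>e\<in>E \<inter> {e. ?P0 e}. \<beta>) * (\<Prod>e\<in>E \<inter> - {e. ?P0 e}. if ?P1 e then \<gamma> else 1)"
    by (rule prod.If_cases) (fact assms(2))
  also have "(\<Prod>e\<in>E \<inter> - {e. ?P0 e}. if ?P1 e then \<gamma> else 1)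
      = (\<Prod>e\<in>E \<inter> - {e. ?P0 e} \<inter> {e. ?P1 e}. \<gamma>) * (\<Prod>e\<in>E \<inter> - {e. ?P0 e} \<inter> - {e. ?P1 e}. 1)"
    by (rule prod.If_cases) (use assms(2) in auto)
  also have "E \<inter> - {e. ?P0 e} \<inter> {e. ?P1 e} = {e \<in> E. ?P1 e}"
    using assms(3) by fastforce
  also have "E \<inter> {e. ?P0 e} = {e \<in> E. ?P0 e}" by auto
  finally have "(\<Prod>e\<in>E. ew \<beta> \<gamma> \<sigma> e) = \<beta> ^ m0 E \<sigma> * \<gamma> ^ m1 E \<sigma>"
    by (simp add: m0_def m1_def)
  then show ?thesis
    by (simp add: gibbs_weight_def Wt_def power_sum mult.assoc)
qed

lemma sum_gw:
  assumes "finite V" "finite E" "\<forall>e\<in>E. e \<noteq> {}" "0 \<in> V"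
  shows "(\<Sum>\<sigma>\<in>{\<sigma> \<in> configs V. \<sigma> 0 = c0}. gibbs_weight \<beta> \<gamma> lam V E \<sigma>)
       = Zs \<beta> \<gamma> V E ((\<lambda>v c. lam ^ c)(0 := \<lambda>c. lam ^ c * (if c = c0 then 1 else 0)))"
proof -
  have fc: "finite (configs V)" using assms(1) by (simp add: configs_def finite_PiE)
  have "(\<Sum>\<sigma>\<in>{\<sigma> \<in> configs V. \<sigma> 0 = c0}. gibbs_weight \<beta> \<gamma> lam V E \<sigma>)
      = (\<Sum>\<sigma>\<in>configs V. if \<sigma> 0 = c0 then gibbs_weight \<beta> \<gamma> lam V E \<sigma> else 0)"
    by (rule sum.inter_filter[OF fc])
  also have "\<dots> = Zs \<beta> \<gamma> V E ((\<lambda>v c. lam ^ c)(0 := \<lambda>c. lam ^ c * (if c = c0 then 1 else 0)))"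
    unfolding Zs_def
  proof (rule sum.cong[OF refl])
    fix \<sigma> assume "\<sigma> \<in> configs V"
    have "Wt \<beta> \<gamma> V E ((\<lambda>v c. lam ^ c)(0 := \<lambda>c. lam ^ c * (if c = c0 then 1 else 0))) \<sigma>
        = Wt \<beta> \<gamma> V E (\<lambda>v c. lam ^ c) \<sigma> * (if \<sigma> 0 = c0 then 1 else 0)"
      unfolding Wt_def using prod_upd[OF assms(1,4), of "\<lambda>v c. lam ^ c" "\<lambda>c. if c = c0 then 1 else 0" \<sigma>]
      by simp
    then show "(if \<sigma> 0 = c0 then gibbs_weight \<beta> \<gamma> lam V E \<sigma> else 0)
        = Wt \<beta> \<gamma> V E ((\<lambda>v c. lam ^ c)(0 := \<lambda>c. lam ^ c * (if c = c0 then 1 else 0))) \<sigma>"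
      using gibbs_Wt[OF assms(1-3)] by simp
  qed
  finally show ?thesis .
qed

lemma part_Zs:
  assumes "finite V" "finite E" "\<forall>e\<in>E. e \<noteq> {}"
  shows "partition_fn \<beta> \<gamma> lam V E = Zs \<beta> \<gamma> V E (\<lambda>v c. lam ^ c)"
  unfolding partition_fn_def Zs_def using gibbs_Wt[OF assms] by simp

definition Gf :: "real \<Rightarrow> real" where
  "Gf z = (1 + \<gamma> * lam * z) / (\<beta> + lam * z)"

fun val :: "bool \<Rightarrow> tr \<Rightarrow> real" where
  "val tri Lf = (if tri then Tf \<beta> \<gamma> lam 1 / Tf \<beta> \<gamma> lam 0 else 1)"
| "val tri (N a b) = Gf (val tri a) * Gf (val tri b)"

lemma Tf_vals: "Tf \<beta> \<gamma> lam 0 = \<beta>^3 + 2*lam*\<beta> + lam^2*\<gamma>" "Tf \<beta> \<gamma> lam 1 = \<beta> + 2*lam*\<gamma> + lam^2*\<gamma>^3"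
  by (simp_all add: Tf_def Am_def power2_eq_square power3_eq_cube algebra_simps)

lemma msg01: "msg \<beta> \<gamma> lam tri s 0 = fac \<beta> \<gamma> lam tri s 0 * \<beta> + lam * fac \<beta> \<gamma> lam tri s 1"
  "msg \<beta> \<gamma> lam tri s 1 = fac \<beta> \<gamma> lam tri s 0 + lam * fac \<beta> \<gamma> lam tri s 1 * \<gamma>"
  by (simp_all add: msg_def Am_def)

end

locale spin =
  fixes \<beta> \<gamma> lam :: real
  assumes b0: "\<beta> \<ge> 0" and g0: "\<gamma> \<ge> 0" and bg: "\<beta> \<noteq> 0 \<or> \<gamma> \<noteq> 0" and lp: "lam > 0"
begin

lemma Tf_pos: "Tf \<beta> \<gamma> lam 0 > 0" "Tf \<beta> \<gamma> lam 1 > 0"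
proof -
  have bg': "\<beta> > 0 \<or> \<gamma> > 0" using b0 g0 bg by auto
  have a: "\<beta>^3 \<ge> 0" "2*lam*\<beta> \<ge> 0" "lam^2*\<gamma> \<ge> 0" "2*lam*\<gamma> \<ge> 0" "lam^2*\<gamma>^3 \<ge> 0"
    using b0 g0 lp by auto
  have b: "\<beta>^3 > 0 \<or> lam^2*\<gamma> > 0" "\<beta> > 0 \<or> 2*lam*\<gamma> > 0" using bg' lp by auto
  show "Tf \<beta> \<gamma> lam 0 > 0"
    unfolding Tf_vals by (rule disjE[OF b(1)]) (use a in linarith)+
  show "Tf \<beta> \<gamma> lam 1 > 0"
    unfolding Tf_vals by (rule disjE[OF b(2)]) (use a b0 in linarith)+
qed

lemma fac_pos: "fac \<beta> \<gamma> lam tri t 0 > 0 \<and> fac \<beta> \<gamma> lam tri t 1 > 0"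
proof (induction t)
  case Lf then show ?case using Tf_pos by simp
next
  case (N a b)
  have m: "msg \<beta> \<gamma> lam tri s 0 > 0 \<and> msg \<beta> \<gamma> lam tri s 1 > 0"
    if "fac \<beta> \<gamma> lam tri s 0 > 0 \<and> fac \<beta> \<gamma> lam tri s 1 > 0" for s
  proof -
    have "fac \<beta> \<gamma> lam tri s 0 * \<beta> \<ge> 0" "lam * fac \<beta> \<gamma> lam tri s 1 > 0"
      "lam * fac \<beta> \<gamma> lam tri s 1 * \<gamma> \<ge> 0" using that b0 g0 lp by auto
    then show ?thesis using that unfolding msg01 by linarith
  qed
  show ?case unfolding fac_N using m[OF N.IH(1)] m[OF N.IH(2)] by simp
qed

lemma msg_pos: "msg \<beta> \<gamma> lam tri s 0 > 0" "msg \<beta> \<gamma> lam tri s 1 > 0"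
proof -
  have f: "fac \<beta> \<gamma> lam tri s 0 > 0" "fac \<beta> \<gamma> lam tri s 1 > 0" using fac_pos by auto
  have "fac \<beta> \<gamma> lam tri s 0 * \<beta> \<ge> 0" "lam * fac \<beta> \<gamma> lam tri s 1 > 0"
    "lam * fac \<beta> \<gamma> lam tri s 1 * \<gamma> \<ge> 0" using f b0 g0 lp by auto
  then show "msg \<beta> \<gamma> lam tri s 0 > 0" "msg \<beta> \<gamma> lam tri s 1 > 0" using f unfolding msg01 by linarith+
qed

lemma Gf_pos: "z > 0 \<Longrightarrow> Gf \<beta> \<gamma> lam z > 0"
proof -
  assume z: "z > 0"
  have "\<gamma> * lam * z \<ge> 0" "lam * z > 0" using z g0 lp by auto
  then have "1 + \<gamma> * lam * z > 0" "\<beta> + lam * z > 0" using b0 by linarith+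
  then show ?thesis unfolding Gf_def by simp
qed

lemma val_pos: "val \<beta> \<gamma> lam tri t > 0"
proof (induction t)
  case Lf then show ?case using Tf_pos by simp
next
  case (N a b) then show ?case using Gf_pos by simp
qed

lemma fac_val: "fac \<beta> \<gamma> lam tri t 1 = val \<beta> \<gamma> lam tri t * fac \<beta> \<gamma> lam tri t 0"
  and msg_val: "msg \<beta> \<gamma> lam tri t 1 = Gf \<beta> \<gamma> lam (val \<beta> \<gamma> lam tri t) * msg \<beta> \<gamma> lam tri t 0"
proof -
  have mv: "msg \<beta> \<gamma> lam tri s 1 = Gf \<beta> \<gamma> lam (val \<beta> \<gamma> lam tri s) * msg \<beta> \<gamma> lam tri s 0"
    if fv: "fac \<beta> \<gamma> lam tri s 1 = val \<beta> \<gamma> lam tri s * fac \<beta> \<gamma> lam tri s 0" for s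
  proof -
    have "\<beta> + lam * val \<beta> \<gamma> lam tri s > 0" using b0 lp val_pos by (simp add: add_nonneg_pos)
    then show ?thesis unfolding msg01 fv Gf_def by (simp add: field_simps)
  qed
  have fv: "fac \<beta> \<gamma> lam tri t 1 = val \<beta> \<gamma> lam tri t * fac \<beta> \<gamma> lam tri t 0"
  proof (induction t)
    case Lf then show ?case using Tf_pos by simp
  next
    case (N a b)
    have "fac \<beta> \<gamma> lam tri (N a b) 1 = msg \<beta> \<gamma> lam tri a 1 * msg \<beta> \<gamma> lam tri b 1" by (rule fac_N)
    also have "\<dots> = (Gf \<beta> \<gamma> lam (val \<beta> \<gamma> lam tri a) * msg \<beta> \<gamma> lam tri a 0) * (Gf \<beta> \<gamma> lam (val \<beta> \<gamma> lam tri b) * msg \<beta> \<gamma> lam tri b 0)"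
      by (simp only: mv[OF N.IH(1)] mv[OF N.IH(2)])
    also have "\<dots> = val \<beta> \<gamma> lam tri (N a b) * fac \<beta> \<gamma> lam tri (N a b) 0"
      by (simp only: fac_N val.simps mult_ac)
    finally show ?case .
  qed
  show "fac \<beta> \<gamma> lam tri t 1 = val \<beta> \<gamma> lam tri t * fac \<beta> \<gamma> lam tri t 0" by (rule fv)
  show "msg \<beta> \<gamma> lam tri t 1 = Gf \<beta> \<gamma> lam (val \<beta> \<gamma> lam tri t) * msg \<beta> \<gamma> lam tri t 0" by (rule mv[OF fv])
qed

lemma eff_gadget: "effective_field \<beta> \<gamma> lam (GV tri t) (GE tri t) 0 = Gf \<beta> \<gamma> lam (val \<beta> \<gamma> lam tri t)"
proof -
  let ?m0 = "msg \<beta> \<gamma> lam tri t 0" and ?m1 = "msg \<beta> \<gamma> lam tri t 1"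
  have z0: "0 \<in> GV tri t" by (simp add: GV_def)
  have nz: "\<forall>v\<in>fV tri t 1. v \<noteq> 0" using fV_range by fastforce
  have S: "(\<Sum>\<sigma>\<in>{\<sigma> \<in> configs (GV tri t). \<sigma> 0 = c0}. gibbs_weight \<beta> \<gamma> lam (GV tri t) (GE tri t) \<sigma>)
      = lam ^ c0 * (if c0 = 0 then ?m0 else if c0 = 1 then ?m1 else 0)" for c0
    unfolding sum_gw[OF GV_fin GE_fin GE_ne z0]
    by (subst Zs_gadget) (use nz in auto)
  have Z: "partition_fn \<beta> \<gamma> lam (GV tri t) (GE tri t) = ?m0 + lam * ?m1"
    unfolding part_Zs[OF GV_fin GE_fin GE_ne] by (subst Zs_gadget) (use nz in auto)
  have pos: "?m0 > 0" "?m1 > 0" using msg_pos by auto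
  have Zp: "?m0 + lam * ?m1 > 0" using pos lp by (simp add: add_pos_pos)
  have "effective_field \<beta> \<gamma> lam (GV tri t) (GE tri t) 0 = (1 / lam) * ((lam * ?m1 / (?m0 + lam * ?m1)) / (?m0 / (?m0 + lam * ?m1)))"
    unfolding effective_field_def gibbs_prob_def S Z by simp
  also have "\<dots> = (1 / lam) * ((lam * ?m1) / ?m0)"
  proof -
    have "(x / Z) / (y / Z) = x / y" if "Z \<noteq> 0" for x y Z :: real
      using that by (cases "y = 0") simp_all
    then show ?thesis using Zp by simp
  qed
  also have "\<dots> = ?m1 / ?m0" using lp by simp
  also have "\<dots> = Gf \<beta> \<gamma> lam (val \<beta> \<gamma> lam tri t)" using msg_val pos by (simp add: field_simps)
  finally show ?thesis .
qed

end

lemma gadget_valid: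
  fixes \<beta> \<gamma> lam :: real
  defines "tri \<equiv> lam = (1 - \<beta>) / (1 - \<gamma>) \<and> \<beta> \<noteq> \<gamma>"
  shows "field_gadget \<beta> \<gamma> lam (GV tri t) (GE tri t) 0"
proof (cases tri)
  case False
  have "GV tri t = TV t" "GE tri t = TE t" using False
    by (auto simp: GV_def GE_def fV_def fE_def TV_def TE_def)
  moreover have nc: "\<not> (lam = (1 - \<beta>) / (1 - \<gamma>) \<and> \<beta> \<noteq> \<gamma>)" using False tri_def by simp
  ultimately show ?thesis using TV_tree TE_deg0 unfolding field_gadget_def if_not_P[OF nc]
    by (simp add: TV_def)
next
  case True
  let ?L = "lvs t 1" and ?a = "Suc" and ?b = "\<lambda>l::nat. l + 2"
  have V: "GV tri t = TV t \<union> ?a ` ?L \<union> ?b ` ?L" using True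
    by (auto simp: GV_def fV_def TV_def)
  have E: "GE tri t = TE t \<union> (\<Union>l\<in>?L. {{l, ?a l}, {l, ?b l}, {?a l, ?b l}})" using True
    by (auto simp: GE_def fE_def TE_def triE_def)
  have Lsub: "?L \<subseteq> {l \<in> TV t. l \<noteq> 0 \<and> degree (TE t) l = 1}"
  proof
    fix l assume l: "l \<in> ?L"
    have "l \<in> TV t" using lvs_sub[OF l] by (auto simp: TV_def)
    moreover have "l \<noteq> 0" using lvs_range[OF l] by auto
    ultimately show "l \<in> {l \<in> TV t. l \<noteq> 0 \<and> degree (TE t) l = 1}" using TE_degl[OF l] by simp
  qed
  have aV: "?a ` ?L \<inter> TV t = {}"
  proof -
    have "Suc l \<notin> TV t" if l: "l \<in> ?L" for l
      using lvs_succ[OF l] lvs_range[OF l] by (auto simp: TV_def)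
    then show ?thesis by auto
  qed
  have bV: "?b ` ?L \<inter> TV t = {}"
  proof -
    have "l + 2 \<notin> TV t" if l: "l \<in> ?L" for l
      using lvs_succ[OF l] lvs_range[OF l] by (auto simp: TV_def)
    then show ?thesis by auto
  qed
  have ab: "?a ` ?L \<inter> ?b ` ?L = {}"
  proof -
    have "Suc l \<noteq> l' + 2" if l: "l \<in> ?L" and l': "l' \<in> ?L" for l l'
    proof
      assume eq: "Suc l = l' + 2"
      have "l \<in> TV t" using lvs_sub[OF l] by (auto simp: TV_def)
      moreover have "l = Suc l'" using eq by simp
      ultimately show False using aV l' by auto
    qed
    then show ?thesis by auto
  qed
  have inj: "inj_on ?a ?L" "inj_on ?b ?L" by (auto simp: inj_on_def)
  have "\<exists>VT ET L a b. is_tree VT ET \<and> 0 \<in> VT \<and> degree ET 0 = 1 \<and>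
           L \<subseteq> {l \<in> VT. l \<noteq> 0 \<and> degree ET l = 1} \<and>
           inj_on a L \<and> inj_on b L \<and>
           a ` L \<inter> VT = {} \<and> b ` L \<inter> VT = {} \<and> a ` L \<inter> b ` L = {} \<and>
           GV tri t = VT \<union> a ` L \<union> b ` L \<and>
           GE tri t = ET \<union> (\<Union>l\<in>L. {{l, a l}, {l, b l}, {a l, b l}})"
    apply (rule exI[of _ "TV t"], rule exI[of _ "TE t"], rule exI[of _ ?L], rule exI[of _ ?a], rule exI[of _ ?b])
    using TV_tree TE_deg0 Lsub inj aV bV ab V E by (simp add: TV_def)
  moreover have c: "lam = (1 - \<beta>) / (1 - \<gamma>) \<and> \<beta> \<noteq> \<gamma>" using True tri_def by simp
  ultimately show ?thesis unfolding field_gadget_def if_P[OF c] by simp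
qed

locale afs =
  fixes \<beta> \<gamma> lam :: real
  assumes af: "antiferromagnetic \<beta> \<gamma>" and lp0: "lam > 0"
begin

lemma b0': "\<beta> \<ge> 0" and g0': "\<gamma> \<ge> 0" and bg1: "\<beta> * \<gamma> < 1" and bgnz: "\<beta> \<noteq> 0 \<or> \<gamma> \<noteq> 0"
  using af by (auto simp: antiferromagnetic_def)

sublocale spin \<beta> \<gamma> lam
  using b0' g0' bgnz lp0 by unfold_locales auto

abbreviation G where "G \<equiv> Gf \<beta> \<gamma> lam"

lemma den_pos: "z > 0 \<Longrightarrow> \<beta> + lam * z > 0"
  using b0 lp by (simp add: add_nonneg_pos)

lemma num_pos: "z > 0 \<Longrightarrow> 1 + \<gamma> * lam * z > 0"
  using g0 lp by (simp add: add_pos_nonneg)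

lemma G_diff: "a > 0 \<Longrightarrow> b > 0 \<Longrightarrow> G a - G b = lam * (b - a) * (1 - \<beta> * \<gamma>) / ((\<beta> + lam * a) * (\<beta> + lam * b))"
  using den_pos[of a] den_pos[of b] unfolding Gf_def by (simp add: field_simps)

lemma G_strict: "0 < a \<Longrightarrow> a < b \<Longrightarrow> G b < G a"
proof -
  assume ab: "0 < a" "a < b"
  have "lam * (b - a) * (1 - \<beta> * \<gamma>) > 0" using ab lp bg1 by simp
  moreover have "(\<beta> + lam * a) * (\<beta> + lam * b) > 0" using den_pos ab by simp
  ultimately have "G a - G b > 0" using G_diff[of a b] ab by simp
  then show ?thesis by simp
qed

lemma G_mono: "0 < a \<Longrightarrow> a \<le> b \<Longrightarrow> G b \<le> G a"
  using G_strict by (cases "a = b") (auto simp: less_eq_real_def)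

lemma G_inj: "0 < a \<Longrightarrow> 0 < b \<Longrightarrow> G a = G b \<Longrightarrow> a = b"
  using G_strict by (metis linorder_neq_iff)

lemma G_ge: "\<beta> = 0 \<Longrightarrow> z > 0 \<Longrightarrow> \<gamma> \<le> G z"
proof -
  assume b: "\<beta> = 0" and z: "z > 0"
  have "G z = \<gamma> + 1 / (lam * z)" using b z lp unfolding Gf_def by (simp add: field_simps)
  then show ?thesis using z lp by simp
qed

lemma G_le: "\<gamma> = 0 \<Longrightarrow> z > 0 \<Longrightarrow> G z \<le> 1 / \<beta>"
proof -
  assume g: "\<gamma> = 0" and z: "z > 0"
  then have bp: "\<beta> > 0" using bgnz b0 by auto
  have "G z = 1 / (\<beta> + lam * z)" using g unfolding Gf_def by simp
  also have "\<dots> \<le> 1 / \<beta>"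
  proof (rule divide_left_mono)
    show "\<beta> \<le> \<beta> + lam * z" using z lp by simp
    show "0 < (\<beta> + lam * z) * \<beta>" using den_pos[OF z] bp by simp
  qed simp
  finally show ?thesis .
qed

definition Dom :: "real \<Rightarrow> bool" where
  "Dom y \<longleftrightarrow> y > 0 \<and> (\<beta> = 0 \<longrightarrow> \<gamma>^2 \<le> y) \<and> (\<gamma> = 0 \<longrightarrow> y \<le> 1 / \<beta>^2)"

lemma Dom_prod: "a > 0 \<Longrightarrow> b > 0 \<Longrightarrow> Dom (G a * G b)"
proof -
  assume a: "a > 0" and b: "b > 0"
  have p: "G a > 0" "G b > 0" using Gf_pos a b by auto
  have 1: "\<gamma>^2 \<le> G a * G b" if "\<beta> = 0"
    using G_ge[OF that a] G_ge[OF that b] g0 by (simp add: power2_eq_square mult_mono)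
  have 2: "G a * G b \<le> 1 / \<beta>^2" if "\<gamma> = 0"
  proof -
    have "G a * G b \<le> (1/\<beta>) * (1/\<beta>)"
      using G_le[OF that a] G_le[OF that b] p b0 by (intro mult_mono) auto
    then show ?thesis by (simp add: power2_eq_square)
  qed
  show ?thesis unfolding Dom_def using p 1 2 by simp
qed

lemma Dom_between: "Dom y1 \<Longrightarrow> Dom y2 \<Longrightarrow> y1 \<le> y \<Longrightarrow> y \<le> y2 \<Longrightarrow> Dom y"
  unfolding Dom_def by auto

definition el :: "real \<Rightarrow> real" where
  "el y = lam * y * (1 - \<beta> * \<gamma>) / ((\<beta> + lam * y) * (1 + \<gamma> * lam * y))"

lemma el_nonneg: "y > 0 \<Longrightarrow> el y \<ge> 0"
proof -
  assume y: "y > 0"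
  have "lam * y * (1 - \<beta> * \<gamma>) \<ge> 0" using y lp bg1 by simp
  moreover have "(\<beta> + lam * y) * (1 + \<gamma> * lam * y) > 0" using den_pos[OF y] num_pos[OF y] by simp
  ultimately show ?thesis unfolding el_def by simp
qed


lemma el_bound: "\<exists>k. 0 \<le> k \<and> k < 1 \<and> (\<forall>y. Dom y \<longrightarrow> el y \<le> k)"
proof -
  have bgn: "\<beta> * \<gamma> \<ge> 0" using b0 g0 by simp
  consider "\<beta> * \<gamma> > 0" | "\<beta> = 0" | "\<gamma> = 0" using bgn by (metis less_eq_real_def mult_eq_0_iff)
  then show ?thesis
  proof cases
    case 1
    let ?k = "(1 - \<beta> * \<gamma>) / (1 + \<beta> * \<gamma>)"
    have "el y \<le> ?k" if y: "Dom y" for y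
    proof -
      define w where "w = lam * y"
      have w: "w > 0" using y lp unfolding Dom_def w_def by simp
      have e: "el y = w * (1 - \<beta> * \<gamma>) / ((\<beta> + w) * (1 + \<gamma> * w))"
        unfolding el_def w_def by (simp add: mult.assoc)
      have "(\<beta> + w) * (1 + \<gamma> * w) = (1 + \<beta> * \<gamma>) * w + (\<beta> + \<gamma> * w * w)"
        by (simp add: algebra_simps)
      moreover have "\<gamma> * w * w \<ge> 0" using g0 w by simp
      ultimately have le: "(1 + \<beta> * \<gamma>) * w \<le> (\<beta> + w) * (1 + \<gamma> * w)" using b0 by linarith
      have "w * (1 - \<beta> * \<gamma>) / ((\<beta> + w) * (1 + \<gamma> * w)) \<le> w * (1 - \<beta> * \<gamma>) / ((1 + \<beta> * \<gamma>) * w)"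
      proof (rule divide_left_mono[OF le])
        show "0 \<le> w * (1 - \<beta> * \<gamma>)" using w bg1 by simp
        show "0 < (\<beta> + w) * (1 + \<gamma> * w) * ((1 + \<beta> * \<gamma>) * w)"
          using w b0 g0 bgn by (intro mult_pos_pos add_nonneg_pos add_pos_nonneg) auto
      qed
      also have "\<dots> = ?k" using w by simp
      finally show ?thesis using e by simp
    qed
    moreover have "0 \<le> ?k" using bg1 bgn by simp
    moreover have "?k < 1" using 1 by simp
    ultimately show ?thesis by blast
  next
    case 2
    then have gp: "\<gamma> > 0" using bgnz g0 by auto
    let ?k = "1 / (1 + \<gamma> * lam * \<gamma>^2)"
    have "el y \<le> ?k" if y: "Dom y" for y
    proof -
      have yp: "y > 0" and yg: "\<gamma>^2 \<le> y" using y 2 unfolding Dom_def by auto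
      have e: "el y = 1 / (1 + \<gamma> * lam * y)" unfolding el_def using 2 yp lp by simp
      have "\<gamma> * lam * \<gamma>^2 \<le> \<gamma> * lam * y" using yg gp lp by simp
      moreover have "1 + \<gamma> * lam * \<gamma>^2 > 0" using gp lp by (simp add: add_pos_nonneg)
      moreover have "1 + \<gamma> * lam * y > 0" using num_pos[OF yp] .
      ultimately show ?thesis unfolding e by (intro divide_left_mono) auto
    qed
    moreover have "?k < 1"
    proof -
      have "\<gamma> * lam * \<gamma>^2 > 0" using gp lp by simp
      then show ?thesis by simp
    qed
    moreover have "?k \<ge> 0" using gp lp by (simp add: add_pos_nonneg less_imp_le)
    ultimately show ?thesis by blast
  next
    case 3
    then have bp: "\<beta> > 0" using bgnz b0 by auto
    let ?T = "lam / \<beta>^2"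
    let ?k = "?T / (\<beta> + ?T)"
    have Tp: "?T > 0" using lp bp by simp
    have "el y \<le> ?k" if y: "Dom y" for y
    proof -
      have yp: "y > 0" and yg: "y \<le> 1 / \<beta>^2" using y 3 unfolding Dom_def by auto
      have "lam * y \<le> lam * (1 / \<beta>^2)" using yg lp by (intro mult_left_mono) auto
      then have ty: "lam * y \<le> ?T" by simp
      have e: "el y = lam * y / (\<beta> + lam * y)" unfolding el_def using 3 by simp
      have aux: "a * (b + T) \<le> T * (b + a)" if "a \<le> T" "b > 0" for a b T :: real
      proof -
        have "a * (b + T) - T * (b + a) = b * (a - T)" by (simp add: algebra_simps)
        moreover have "b * (a - T) \<le> 0" using that by (simp add: mult_nonneg_nonpos)
        ultimately show ?thesis by linarith
      qed
      have "lam * y * (\<beta> + ?T) \<le> ?T * (\<beta> + lam * y)" using aux[OF ty bp] .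
      moreover have fr: "a / b \<le> c / d" if "0 < b" "0 < d" "a * d \<le> c * b" for a b c d :: real
        using that by (simp add: field_simps)
      moreover have "\<beta> + ?T > 0" using Tp bp by simp
      ultimately show ?thesis unfolding e using den_pos[OF yp] by (intro fr) auto
    qed
    moreover have "?k < 1"
    proof -
      have "\<beta> + ?T > 0" using Tp bp by simp
      then show ?thesis using bp by (simp only: divide_less_eq_1_pos)
    qed
    moreover have "?k \<ge> 0"
    proof -
      have "\<beta> + ?T > 0" using Tp bp by simp
      then show ?thesis using Tp lp by (intro divide_nonneg_pos) (auto simp: less_imp_le)
    qed
    ultimately show ?thesis by blast
  qed
qed

definition kk :: real where "kk = (SOME k. 0 \<le> k \<and> k < 1 \<and> (\<forall>y. Dom y \<longrightarrow> el y \<le> k))"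

lemma kk: "0 \<le> kk" "kk < 1" "Dom y \<Longrightarrow> el y \<le> kk"
  using someI_ex[OF el_bound] unfolding kk_def by blast+

end

context afs begin
lemma lnG_deriv: "((\<lambda>z. ln (G (exp z))) has_real_derivative (- el (exp z))) (at z)"
proof -
  let ?e = "exp z"
  have yp: "?e > 0" by simp
  have d: "\<beta> + lam * ?e > 0" "1 + \<gamma> * lam * ?e > 0" using den_pos[OF yp] num_pos[OF yp] by auto
  have dn: "((\<lambda>x. 1 + \<gamma> * lam * exp x) has_real_derivative 0 + \<gamma> * lam * ?e) (at z)"
    by (intro DERIV_add DERIV_const DERIV_cmult DERIV_exp)
  have dd: "((\<lambda>x. \<beta> + lam * exp x) has_real_derivative 0 + lam * ?e) (at z)"
    by (intro DERIV_add DERIV_const DERIV_cmult DERIV_exp)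
  have dq: "((\<lambda>x. (1 + \<gamma> * lam * exp x) / (\<beta> + lam * exp x)) has_real_derivative
      ((0 + \<gamma> * lam * ?e) * (\<beta> + lam * ?e) - (1 + \<gamma> * lam * ?e) * (0 + lam * ?e)) / ((\<beta> + lam * ?e) * (\<beta> + lam * ?e))) (at z)"
    using DERIV_divide[OF dn dd] d by simp
  have qp: "(1 + \<gamma> * lam * ?e) / (\<beta> + lam * ?e) > 0" using d by simp
  have dl: "(ln has_real_derivative inverse ((1 + \<gamma> * lam * ?e) / (\<beta> + lam * ?e))) (at ((1 + \<gamma> * lam * ?e) / (\<beta> + lam * ?e)))"
    using DERIV_ln[OF qp] .
  have "((\<lambda>x. ln ((1 + \<gamma> * lam * exp x) / (\<beta> + lam * exp x))) has_real_derivative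
     inverse ((1 + \<gamma> * lam * ?e) / (\<beta> + lam * ?e)) *
     (((0 + \<gamma> * lam * ?e) * (\<beta> + lam * ?e) - (1 + \<gamma> * lam * ?e) * (0 + lam * ?e)) / ((\<beta> + lam * ?e) * (\<beta> + lam * ?e)))) (at z)"
    using DERIV_chain2[OF dl dq] .
  moreover have "inverse ((1 + \<gamma> * lam * ?e) / (\<beta> + lam * ?e)) *
     (((0 + \<gamma> * lam * ?e) * (\<beta> + lam * ?e) - (1 + \<gamma> * lam * ?e) * (0 + lam * ?e)) / ((\<beta> + lam * ?e) * (\<beta> + lam * ?e)))
     = - el ?e"
  proof -
    have h: "inverse (Nn / D) * ((a*D - Nn*b)/(D*D)) = (a*D - Nn*b)/(Nn*D)" if "D>0" "Nn>0" for Nn D a b :: real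
      using that by (simp add: field_simps)
    have num: "(0 + \<gamma> * lam * ?e) * (\<beta> + lam * ?e) - (1 + \<gamma> * lam * ?e) * (0 + lam * ?e) = - (lam * ?e * (1 - \<beta> * \<gamma>))"
      by (simp add: algebra_simps)
    show ?thesis unfolding h[OF d(1) d(2)] num el_def by (simp add: mult.commute)
  qed
  ultimately show ?thesis unfolding Gf_def by (rule DERIV_cong)
qed

lemma lip:
  assumes d1: "Dom y1" and d2: "Dom y2" and le: "y1 \<le> y2"
  shows "ln (G y2) \<le> ln (G y1)" and "ln (G y1) - ln (G y2) \<le> kk * (ln y2 - ln y1)"
proof -
  have p: "y1 > 0" "y2 > 0" using d1 d2 by (auto simp: Dom_def)
  have gp: "G y1 > 0" "G y2 > 0" using Gf_pos p by auto
  show "ln (G y2) \<le> ln (G y1)" using G_mono[OF p(1) le] gp by simp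
  let ?f = "\<lambda>z. ln (G (exp z)) + kk * z"
  have "?f (ln y1) \<le> ?f (ln y2)"
  proof (rule DERIV_nonneg_imp_nondecreasing[of "ln y1" "ln y2" ?f])
    show "ln y1 \<le> ln y2" using le p by simp
    fix z assume z: "ln y1 \<le> z" "z \<le> ln y2"
    have "y1 \<le> exp z" "exp z \<le> y2" using z p by (metis exp_le_cancel_iff exp_ln)+
    then have dz: "Dom (exp z)" using Dom_between[OF d1 d2] by blast
    have "(?f has_real_derivative (- el (exp z) + kk * 1)) (at z)"
      by (intro DERIV_add lnG_deriv DERIV_cmult DERIV_ident)
    moreover have "- el (exp z) + kk * 1 \<ge> 0" using kk(3)[OF dz] by simp
    ultimately show "\<exists>y. (?f has_real_derivative y) (at z) \<and> 0 \<le> y" by blast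
  qed
  then show "ln (G y1) - ln (G y2) \<le> kk * (ln y2 - ln y1)" using p by (simp add: algebra_simps)
qed

lemma lip_abs: "Dom u \<Longrightarrow> Dom v \<Longrightarrow> \<bar>ln (G u) - ln (G v)\<bar> \<le> kk * \<bar>ln u - ln v\<bar>"
proof -
  assume u: "Dom u" and v: "Dom v"
  have p: "u > 0" "v > 0" using u v by (auto simp: Dom_def)
  show ?thesis
  proof (cases "u \<le> v")
    case True
    have "ln u \<le> ln v" using True p by simp
    then show ?thesis using lip[OF u v True]
      by (simp add: abs_of_nonneg abs_of_nonpos)
  next
    case False
    then have vu: "v \<le> u" by simp
    have "ln v \<le> ln u" using vu p by simp
    then show ?thesis using lip[OF v u vu]
      by (simp add: abs_of_nonneg abs_of_nonpos abs_minus_commute)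
  qed
qed

lemma Dom_G: "a > 0 \<Longrightarrow> b > 0 \<Longrightarrow> Dom (G a * G b)" by (rule Dom_prod)

lemma contr1:
  assumes a: "a > 0" and x: "x > 0" and xf: "G (x * x) = x"
  shows "\<bar>ln (G (G a * G (G a * G a))) - ln x\<bar> \<le> kk * \<bar>ln (G a) - ln x\<bar>"
proof -
  define R where "R = G a"
  have R: "R > 0" using Gf_pos a by (simp add: R_def)
  have RR: "R * R > 0" using R by simp
  have xx: "x * x > 0" using x by simp
  have Du: "Dom (R * G (R * R))" unfolding R_def by (rule Dom_prod[OF a]) (use RR in \<open>simp add: R_def\<close>)
  have Dxx: "Dom (x * x)" using Dom_prod[OF xx xx] xf by simp
  have DRR: "Dom (R * R)" unfolding R_def using Dom_prod[OF a a] .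
  have S: "G (R * R) > 0" using Gf_pos RR by simp
  define d where "d = ln R - ln x"
  define D where "D = ln (G (R * R)) - ln (G (x * x))"
  have lnxx: "ln (x * x) = 2 * ln x" using x by (simp add: ln_mult)
  have lnRR: "ln (R * R) = 2 * ln R" using R by (simp add: ln_mult)
  have e1: "ln (R * G (R * R)) - ln (x * x) = d + D"
    using R S x xf by (simp add: ln_mult d_def D_def lnxx)
  have k1: "kk \<le> 1" "kk \<ge> 0" using kk by auto
  have main: "\<bar>d + D\<bar> \<le> \<bar>d\<bar>"
  proof (cases "R \<le> x")
    case True
    have "R * R \<le> x * x" using True R by (simp add: mult_mono)
    from lip[OF DRR Dxx this] have f1: "0 \<le> D" "D \<le> kk * (2 * ln x - 2 * ln R)"
      unfolding D_def lnxx lnRR by auto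
    have dn: "d \<le> 0" using True R x by (simp add: d_def)
    have f2: "(1 - kk) * d \<le> 0" using dn k1 by (simp add: mult_nonneg_nonpos)
    have f1': "D \<le> 2 * (kk * ln x) - 2 * (kk * ln R)" using f1(2) by (simp add: algebra_simps)
    have f2': "ln R - ln x - kk * ln R + kk * ln x \<le> 0" using f2 by (simp add: d_def algebra_simps)
    show ?thesis using f1(1) f1' f2' dn unfolding d_def abs_le_iff by (simp add: abs_if; linarith)
  next
    case False
    then have xR: "x \<le> R" by simp
    have "x * x \<le> R * R" using xR x by (simp add: mult_mono)
    from lip[OF Dxx DRR this] have f1: "D \<le> 0" "- D \<le> kk * (2 * ln R - 2 * ln x)"
      unfolding D_def lnxx lnRR by auto
    have dn: "d \<ge> 0" using xR R x by (simp add: d_def)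
    have f2: "(1 - kk) * d \<ge> 0" using dn k1 by simp
    have f1': "- D \<le> 2 * (kk * ln R) - 2 * (kk * ln x)" using f1(2) by (simp add: algebra_simps)
    have f2': "ln R - ln x - kk * ln R + kk * ln x \<ge> 0" using f2 by (simp add: d_def algebra_simps)
    show ?thesis using f1(1) f1' f2' dn unfolding d_def abs_le_iff by (simp add: abs_if; linarith)
  qed
  have "\<bar>ln (G (R * G (R * R))) - ln (G (x * x))\<bar> \<le> kk * \<bar>ln (R * G (R * R)) - ln (x * x)\<bar>"
    by (rule lip_abs[OF Du Dxx])
  also have "\<dots> \<le> kk * \<bar>d\<bar>" unfolding e1 using main k1 by (simp add: mult_left_mono)
  finally show ?thesis using xf by (simp add: R_def d_def)
qed

lemma contr2:
  assumes a: "a > 0" and x: "x > 0" and xf: "G (x * x) = x"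
  shows "\<bar>ln (G (G a * x)) - ln x\<bar> \<le> kk * \<bar>ln (G a) - ln x\<bar>"
proof -
  have xx: "x * x > 0" using x by simp
  have Du: "Dom (G a * x)" using Dom_prod[OF a xx] xf by simp
  have Dxx: "Dom (x * x)" using Dom_prod[OF xx xx] xf by simp
  have R: "G a > 0" using Gf_pos a by simp
  have "\<bar>ln (G (G a * x)) - ln (G (x * x))\<bar> \<le> kk * \<bar>ln (G a * x) - ln (x * x)\<bar>"
    by (rule lip_abs[OF Du Dxx])
  also have "ln (G a * x) - ln (x * x) = ln (G a) - ln x" using R x by (simp add: ln_mult)
  finally show ?thesis using xf by simp
qed

end

lemma conv_ln:
  fixes s :: "nat \<Rightarrow> real"
  assumes sp: "\<And>n. s n > 0" and x: "x > 0" and k: "0 \<le> k" "k < 1"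
    and st: "\<And>n. \<bar>ln (s (Suc n)) - ln x\<bar> \<le> k * \<bar>ln (s n) - ln x\<bar>"
  shows "s \<longlonglongrightarrow> x"
proof -
  define C where "C = \<bar>ln (s 0) - ln x\<bar>"
  have bnd: "\<bar>ln (s n) - ln x\<bar> \<le> k ^ n * C" for n
  proof (induction n)
    case 0 then show ?case by (simp add: C_def)
  next
    case (Suc n)
    have "\<bar>ln (s (Suc n)) - ln x\<bar> \<le> k * \<bar>ln (s n) - ln x\<bar>" by (rule st)
    also have "\<dots> \<le> k * (k ^ n * C)" using Suc k by (simp add: mult_left_mono)
    finally show ?case by simp
  qed
  have lim0: "(\<lambda>n. k ^ n * C) \<longlonglongrightarrow> 0"
    using tendsto_mult[OF LIMSEQ_power_zero[of k] tendsto_const[of C]] k by simp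
  have lim0': "(\<lambda>n. - (k ^ n * C)) \<longlonglongrightarrow> 0" using tendsto_minus[OF lim0] by simp
  have b1: "\<forall>n. - (k ^ n * C) \<le> ln (s n) - ln x" "\<forall>n. ln (s n) - ln x \<le> k ^ n * C"
  proof (safe)
    fix n show "- (k ^ n * C) \<le> ln (s n) - ln x" using bnd[of n] unfolding abs_le_iff by linarith
    show "ln (s n) - ln x \<le> k ^ n * C" using bnd[of n] unfolding abs_le_iff by linarith
  qed
  have "(\<lambda>n. ln (s n) - ln x) \<longlonglongrightarrow> 0"
    by (rule tendsto_sandwich[OF always_eventually[OF b1(1)] always_eventually[OF b1(2)] lim0' lim0])
  then have "(\<lambda>n. (ln (s n) - ln x) + ln x) \<longlonglongrightarrow> 0 + ln x" by (intro tendsto_intros)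
  then have "(\<lambda>n. ln (s n)) \<longlonglongrightarrow> ln x" by simp
  then have "(\<lambda>n. exp (ln (s n))) \<longlonglongrightarrow> exp (ln x)" by (rule tendsto_exp)
  then show ?thesis using sp x by simp
qed

lemma pick:
  fixes s :: "nat \<Rightarrow> real"
  assumes "s \<longlonglongrightarrow> x" "\<And>n. s n \<noteq> x" "e1 > 0" "e2 > 0"
  shows "\<exists>n m. \<bar>s n - x\<bar> < e1 \<and> \<bar>s m - x\<bar> < e2 * \<bar>s n - x\<bar>"
proof -
  from assms(1) have L: "\<forall>r>0. \<exists>no. \<forall>n\<ge>no. \<bar>s n - x\<bar> < r" by (simp add: LIMSEQ_iff)
  obtain n where n: "\<bar>s n - x\<bar> < e1" using L assms(3) by blast
  have "e2 * \<bar>s n - x\<bar> > 0" using assms(2)[of n] assms(4) by simp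
  then obtain m where "\<bar>s m - x\<bar> < e2 * \<bar>s n - x\<bar>" using L by blast
  then show ?thesis using n by blast
qed

context afs begin

lemma Tf_diff:
  assumes "lam * (1 - \<gamma>) = 1 - \<beta>"
  shows "Tf \<beta> \<gamma> lam 1 - Tf \<beta> \<gamma> lam 0 = - (\<beta> - \<gamma>) * (1 - \<beta>)^2"
  using assms unfolding Tf_vals by algebra

lemma start:
  assumes x: "x > 0" "G (x * x) = x" and nt: "\<not> (\<gamma> = \<beta> \<and> lam = 1)"
  shows "G (val \<beta> \<gamma> lam (lam = (1 - \<beta>) / (1 - \<gamma>) \<and> \<beta> \<noteq> \<gamma>) Lf) \<noteq> x"
proof -
  have d1: "\<beta> + lam > 0" using den_pos[of 1] by simp
  have G1: "G 1 = 1 \<longleftrightarrow> lam * (1 - \<gamma>) = 1 - \<beta>"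
  proof -
    have "G 1 = (1 + \<gamma> * lam) / (\<beta> + lam)" by (simp add: Gf_def)
    also have "\<dots> = 1 \<longleftrightarrow> 1 + \<gamma> * lam = \<beta> + lam" using d1 by (simp; auto)
    finally have "G 1 = 1 \<longleftrightarrow> 1 + \<gamma> * lam = \<beta> + lam" .
    moreover have "1 + \<gamma> * lam = \<beta> + lam \<longleftrightarrow> lam * (1 - \<gamma>) = 1 - \<beta>" by (auto simp: algebra_simps)
    ultimately show ?thesis by simp
  qed
  have x1: "x = 1" if g: "G 1 = 1"
  proof (rule ccontr)
    assume "x \<noteq> 1"
    then consider "x < 1" | "x > 1" by linarith
    then show False
    proof cases
      case 1
      have "x * x < x * 1" using 1 x(1) by (intro mult_strict_left_mono) auto
      then have "x * x < 1" using 1 by simp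
      then have "G 1 < G (x * x)" using G_strict x(1) by simp
      then show False using g x(2) 1 by simp
    next
      case 2
      have "x * 1 < x * x" using 2 by (intro mult_strict_left_mono) auto
      then have "1 < x * x" using 2 by linarith
      then have "G (x * x) < G 1" using G_strict by simp
      then show False using g x(2) 2 by simp
    qed
  qed
  show ?thesis
  proof (cases "lam = (1 - \<beta>) / (1 - \<gamma>) \<and> \<beta> \<noteq> \<gamma>")
    case True
    have g1: "\<gamma> \<noteq> 1" using True lp by auto
    have h: "lam * (1 - \<gamma>) = 1 - \<beta>" using True g1 by (simp add: field_simps)
    have b1: "\<beta> \<noteq> 1" using h g1 lp by auto
    have "x = 1" using x1 G1 h by simp
    moreover have "G (Tf \<beta> \<gamma> lam 1 / Tf \<beta> \<gamma> lam 0) \<noteq> 1"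
    proof
      assume "G (Tf \<beta> \<gamma> lam 1 / Tf \<beta> \<gamma> lam 0) = 1"
      then have q1: "G (Tf \<beta> \<gamma> lam 1 / Tf \<beta> \<gamma> lam 0) = G 1" using G1 h by simp
      have q2: "Tf \<beta> \<gamma> lam 1 / Tf \<beta> \<gamma> lam 0 > 0" using Tf_pos by simp
      have "Tf \<beta> \<gamma> lam 1 / Tf \<beta> \<gamma> lam 0 = 1" by (rule G_inj[OF q2 _ q1]) simp
      then have "Tf \<beta> \<gamma> lam 1 - Tf \<beta> \<gamma> lam 0 = 0" using Tf_pos by simp
      then have "- (\<beta> - \<gamma>) * (1 - \<beta>)^2 = 0" using Tf_diff[OF h] by linarith
      moreover have "\<beta> - \<gamma> \<noteq> 0" using True by simp
      moreover have "(1 - \<beta>)^2 \<noteq> 0" using b1 by simp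
      ultimately show False by simp
    qed
    ultimately show ?thesis using True by simp
  next
    case False
    show ?thesis
    proof
      assume a: "G (val \<beta> \<gamma> lam (lam = (1 - \<beta>) / (1 - \<gamma>) \<and> \<beta> \<noteq> \<gamma>) Lf) = x"
      then have g: "G 1 = G (x * x)" using False x(2) by simp
      have xx: "x * x > 0" using x(1) by simp
      have "1 = x * x" by (rule G_inj[OF zero_less_one xx g])
      then have "(x - 1) * (x + 1) = 0" by (simp add: algebra_simps)
      moreover have "x + 1 \<noteq> 0" using x(1) by simp
      ultimately have "x = 1" by simp
      then have "G 1 = 1" using a False by simp
      then have h: "lam * (1 - \<gamma>) = 1 - \<beta>" using G1 by simp
      have g1: "\<gamma> \<noteq> 1"
      proof
        assume "\<gamma> = 1" then have "\<beta> = 1" using h by simp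
        then show False using bg1 \<open>\<gamma> = 1\<close> by simp
      qed
      then have "lam = (1 - \<beta>) / (1 - \<gamma>)" using h by (simp add: field_simps)
      then have "\<beta> = \<gamma>" using False by simp
      then show False using nt \<open>lam = (1 - \<beta>) / (1 - \<gamma>)\<close> g1 by simp
    qed
  qed
qed

lemma main_seq:
  assumes x: "x > 0" "G (x * x) = x" and st: "G (val \<beta> \<gamma> lam tri Lf) \<noteq> x"
  shows "\<exists>s. s \<longlonglongrightarrow> x \<and> (\<forall>n. s n \<noteq> x) \<and> (\<forall>n. \<exists>t. s n = G (val \<beta> \<gamma> lam tri t))"
proof -
  define phiT where "phiT = (\<lambda>t. N t (N t t))"
  define a where "a n = G (val \<beta> \<gamma> lam tri ((phiT ^^ n) Lf))" for n
  have apos: "a n > 0" for n using Gf_pos val_pos by (simp add: a_def)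
  have ac: "\<bar>ln (a (Suc n)) - ln x\<bar> \<le> kk * \<bar>ln (a n) - ln x\<bar>" for n
    using contr1[OF val_pos x] by (simp add: a_def phiT_def)
  show ?thesis
  proof (cases "\<forall>n. a n \<noteq> x")
    case True
    have "a \<longlonglongrightarrow> x" by (rule conv_ln[where s=a and x=x and k=kk]) (use apos x kk ac in auto)
    then show ?thesis using True by (intro exI[of _ a]) (auto simp: a_def)
  next
    case False
    then obtain n0 where n0: "a n0 = x" by blast
    define X where "X = (phiT ^^ n0) Lf"
    have GX: "G (val \<beta> \<gamma> lam tri X) = x" using n0 by (simp add: a_def X_def)
    define psiT where "psiT = (\<lambda>t. N t X)"
    define b where "b m = G (val \<beta> \<gamma> lam tri ((psiT ^^ m) Lf))" for m
    have bpos: "b m > 0" for m using Gf_pos val_pos by (simp add: b_def)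
    have bs: "b (Suc m) = G (b m * x)" for m using GX by (simp add: b_def psiT_def)
    have bn: "b m \<noteq> x" for m
    proof (induction m)
      case 0 then show ?case using st by (simp add: b_def)
    next
      case (Suc m)
      show ?case
      proof
        assume "b (Suc m) = x"
        then have "G (b m * x) = G (x * x)" using bs x(2) by simp
        moreover have "b m * x > 0" "x * x > 0" using bpos[of m] x(1) by auto
        ultimately have "b m * x = x * x" using G_inj by blast
        then show False using Suc x(1) by simp
      qed
    qed
    have bc: "\<bar>ln (b (Suc m)) - ln x\<bar> \<le> kk * \<bar>ln (b m) - ln x\<bar>" for m
      using contr2[OF val_pos x] GX by (simp add: b_def psiT_def)
    have "b \<longlonglongrightarrow> x" by (rule conv_ln[where s=b and x=x and k=kk]) (use bpos x kk bc in auto)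
    then show ?thesis using bn by (intro exI[of _ b]) (auto simp: b_def)
  qed
qed

end

theorem lemma4p2:
  fixes \<beta> \<gamma> lam x :: real
  assumes af: "antiferromagnetic \<beta> \<gamma>"
    and lam: "lam > 0"
    and nontriv: "\<not> (\<gamma> = \<beta> \<and> lam = 1)"
    and xpos: "x > 0"
    and xfix: "x = (1 + \<gamma> * lam * x ^ 2) / (\<beta> + lam * x ^ 2)"
  shows "\<forall>\<epsilon>1 > 0. \<forall>\<epsilon>2 > 0. \<exists>(V1 :: nat set) E1 \<rho>1 (V2 :: nat set) E2 \<rho>2.
           field_gadget \<beta> \<gamma> lam V1 E1 \<rho>1 \<and> field_gadget \<beta> \<gamma> lam V2 E2 \<rho>2 \<and>
           \<bar>effective_field \<beta> \<gamma> lam V1 E1 \<rho>1 - x\<bar> < \<epsilon>1 \<and>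
           \<bar>effective_field \<beta> \<gamma> lam V2 E2 \<rho>2 - x\<bar> < \<epsilon>2 * \<bar>effective_field \<beta> \<gamma> lam V1 E1 \<rho>1 - x\<bar>"
proof (intro allI impI)
  fix e1 e2 :: real
  assume e: "e1 > 0" "e2 > 0"
  interpret afs \<beta> \<gamma> lam using af lam by unfold_locales
  define tri where "tri = (lam = (1 - \<beta>) / (1 - \<gamma>) \<and> \<beta> \<noteq> \<gamma>)"
  have xf: "G (x * x) = x" using xfix by (simp add: Gf_def power2_eq_square)
  have st: "G (val \<beta> \<gamma> lam tri Lf) \<noteq> x" using start[OF xpos xf nontriv] by (simp add: tri_def)
  obtain s where s: "s \<longlonglongrightarrow> x" "\<And>n. s n \<noteq> x" "\<And>n. \<exists>t. s n = G (val \<beta> \<gamma> lam tri t)"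
    using main_seq[OF xpos xf st] by blast
  obtain n m where nm: "\<bar>s n - x\<bar> < e1" "\<bar>s m - x\<bar> < e2 * \<bar>s n - x\<bar>"
    using pick[OF s(1) s(2) e] by blast
  obtain t1 where t1: "s n = G (val \<beta> \<gamma> lam tri t1)" using s(3) by blast
  obtain t2 where t2: "s m = G (val \<beta> \<gamma> lam tri t2)" using s(3) by blast
  have g1: "field_gadget \<beta> \<gamma> lam (GV tri t1) (GE tri t1) 0" and g2: "field_gadget \<beta> \<gamma> lam (GV tri t2) (GE tri t2) 0"
    unfolding tri_def by (rule gadget_valid)+
  have f1: "effective_field \<beta> \<gamma> lam (GV tri t1) (GE tri t1) 0 = s n" using eff_gadget t1 by simp
  have f2: "effective_field \<beta> \<gamma> lam (GV tri t2) (GE tri t2) 0 = s m" using eff_gadget t2 by simp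
  show "\<exists>(V1 :: nat set) E1 \<rho>1 (V2 :: nat set) E2 \<rho>2.
           field_gadget \<beta> \<gamma> lam V1 E1 \<rho>1 \<and> field_gadget \<beta> \<gamma> lam V2 E2 \<rho>2 \<and>
           \<bar>effective_field \<beta> \<gamma> lam V1 E1 \<rho>1 - x\<bar> < e1 \<and>
           \<bar>effective_field \<beta> \<gamma> lam V2 E2 \<rho>2 - x\<bar> < e2 * \<bar>effective_field \<beta> \<gamma> lam V1 E1 \<rho>1 - x\<bar>"
    apply (rule exI[of _ "GV tri t1"], rule exI[of _ "GE tri t1"], rule exI[of _ "0::nat"])
    apply (rule exI[of _ "GV tri t2"], rule exI[of _ "GE tri t2"], rule exI[of _ "0::nat"])
    using g1 g2 nm unfolding f1 f2 by simp
qed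

end
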